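(* For any two interval partitions $\mathcal C,\mathcal C'$ of the column index set $\{0,\dots,L-1\}$, there is a circuit of $\mathcal O(N)$ nearest-neighbour two-qubit Clifford gates (CNOT, CZ) and single-qubit Clifford gates, of depth $\mathcal O(L)=\mathcal O(\sqrt N)$ on the $L\times L$ nearest-neighbour qubit lattice ($N=L^2$), that maps the JW encoding with ordering $m_{\mathcal C}$ to the JW encoding with ordering $m_{\mathcal C'}$.
   Context: Qubits sit on the grid $\{0,\dots,L-1\}^2$ (sites $(r,c)$, row $r$, column $c$) with nearest-neighbour connectivity; mode $j$ is identified with qubit $j$. A canonical ordering is a bijection $m$ from sites to $\{0,\dots,N-1\}$; the JW encoding with ordering $m$ has Majoranas $\chi^{(m)}_{2j}=X_j\prod_{k:m(k)<m(j)}Z_k$, $\chi^{(m)}_{2j+1}=Y_j\prod_{k:m(k)<m(j)}Z_k$, and a unitary $W$ maps the encoding with ordering $m$ to that with $m'$ if $W\chi^{(m)}_aW^\dagger=\chi^{(m')}_a$ for all $a$. An interval partition $\mathcal C=\{C_1,\dots,C_K\}$ of $\{0,\dots,L-1\}$ consists of pairwise disjoint sets of consecutive integers $C_i=\{a_i,\dots,a_i+w_i-1\}$ (width $w_i\ge1$), listed left to right, whose union is $\{0,\dots,L-1\}$. The boustrophedon ordering $m_{\mathcal C}$ is: for $c\in C_j$, $m_{\mathcal C}(r,c)=L\sum_{i<j}w_i+w_jr+(c-a_j)$ if $r$ is even and $L\sum_{i<j}w_i+w_jr+(w_j-1-(c-a_j))$ if $r$ is odd (a snake pattern through each vertical strip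 $C_j\times\{0,\dots,L-1\}$, strips concatenated left to right). *)

theory Defs
  imports Complex_Main
begin

type_synonym site = "nat \<times> nat"   (* (row r, column c) *)

definition sites :: "nat \<Rightarrow> site set" where
  "sites L = {0..<L} \<times> {0..<L}"

definition adjacent :: "site \<Rightarrow> site \<Rightarrow> bool" where
  "adjacent p q \<longleftrightarrow>
     (fst p = fst q \<and> (snd q = snd p + 1 \<or> snd p = snd q + 1)) \<or>
     (snd p = snd q \<and> (fst q = fst p + 1 \<or> fst p = fst q + 1))"

text \<open>Computational basis states of the N = L^2 qubits are subsets of the sites
  (the set of qubits in state |1>). An operator is a matrix indexed by basis
  states; only entries indexed by subsets of sites L are meaningful.\<close>

type_synonym op = "site set \<Rightarrow> site set \<Rightarrow> complex"

definition opmult :: "nat \<Rightarrow> op \<Rightarrow> op \<Rightarrow> op" where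
  "opmult L A B = (\<lambda>x y. \<Sum>z\<in>Pow (sites L). A x z * B z y)"

definition adj :: "op \<Rightarrow> op" where
  "adj A = (\<lambda>x y. cnj (A y x))"

definition op_id :: op where
  "op_id = (\<lambda>x y. if x = y then 1 else 0)"

definition op_eq :: "nat \<Rightarrow> op \<Rightarrow> op \<Rightarrow> bool" where
  "op_eq L A B \<longleftrightarrow> (\<forall>x\<in>Pow (sites L). \<forall>y\<in>Pow (sites L). A x y = B x y)"

definition flip :: "site \<Rightarrow> site set \<Rightarrow> site set" where
  "flip j S = (if j \<in> S then S - {j} else insert j S)"

definition pauliX :: "site \<Rightarrow> op" where
  "pauliX j = (\<lambda>x y. if x = flip j y then 1 else 0)"

definition pauliY :: "site \<Rightarrow> op" where
  "pauliY j = (\<lambda>x y. if x = flip j y then (if j \<in> y then - \<i> else \<i>) else 0)"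

definition Zprod :: "site set \<Rightarrow> op" where
  "Zprod K = (\<lambda>x y. if x = y then (\<Prod>k\<in>K. if k \<in> y then -1 else 1) else 0)"

text \<open>Majoranas: chi_{2j} (b = False) = X_j prod_{m k < m j} Z_k,
  chi_{2j+1} (b = True) = Y_j prod_{m k < m j} Z_k.\<close>
definition majorana :: "nat \<Rightarrow> (site \<Rightarrow> nat) \<Rightarrow> site \<Rightarrow> bool \<Rightarrow> op" where
  "majorana L m j b =
     opmult L (if b then pauliY j else pauliX j) (Zprod {k \<in> sites L. m k < m j})"

definition maps_encoding :: "nat \<Rightarrow> op \<Rightarrow> (site \<Rightarrow> nat) \<Rightarrow> (site \<Rightarrow> nat) \<Rightarrow> bool" where
  "maps_encoding L W m m' \<longleftrightarrow>
     (\<forall>j\<in>sites L. \<forall>b. op_eq L (opmult L (opmult L W (majorana L m j b)) (adj W))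
                                (majorana L m' j b))"

text \<open>An interval partition C_1,...,C_K of {0..L-1}, listed left to right, is
  given by its list of widths [w_1,...,w_K]; C_i = {a_i,...,a_i+w_i-1} with
  a_i = w_1+...+w_{i-1}.\<close>
definition interval_partition :: "nat \<Rightarrow> nat list \<Rightarrow> bool" where
  "interval_partition L ws \<longleftrightarrow> (\<forall>w\<in>set ws. w \<ge> 1) \<and> sum_list ws = L"

definition strip_index :: "nat list \<Rightarrow> nat \<Rightarrow> nat" where
  "strip_index ws c = (THE j. j < length ws \<and> sum_list (take j ws) \<le> c \<and> c < sum_list (take (Suc j) ws))"

definition boustro :: "nat \<Rightarrow> nat list \<Rightarrow> site \<Rightarrow> nat" where
  "boustro L ws p =
     (let r = fst p; c = snd p; j = strip_index ws c;
          a = sum_list (take j ws); w = ws ! j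
      in L * a + w * r + (if even r then c - a else w - 1 - (c - a)))"

type_synonym mat2 = "bool \<Rightarrow> bool \<Rightarrow> complex"  (* False = |0>, True = |1> *)

definition m2mult :: "mat2 \<Rightarrow> mat2 \<Rightarrow> mat2" where
  "m2mult U V = (\<lambda>a b. \<Sum>c\<in>UNIV. U a c * V c b)"

definition adj2 :: "mat2 \<Rightarrow> mat2" where
  "adj2 U = (\<lambda>a b. cnj (U b a))"

definition id2 :: mat2 where "id2 = (\<lambda>a b. if a = b then 1 else 0)"
definition X2 :: mat2 where "X2 = (\<lambda>a b. if a \<noteq> b then 1 else 0)"
definition Y2 :: mat2 where "Y2 = (\<lambda>a b. if a \<noteq> b then (if b then - \<i> else \<i>) else 0)"
definition Z2 :: mat2 where "Z2 = (\<lambda>a b. if a = b then (if a then -1 else 1) else 0)"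

definition single_clifford :: "mat2 \<Rightarrow> bool" where
  "single_clifford U \<longleftrightarrow>
     m2mult U (adj2 U) = id2 \<and>
     (\<forall>P\<in>{X2, Z2}. \<exists>s\<in>{1, -1}. \<exists>Q\<in>{X2, Y2, Z2}.
        m2mult (m2mult U P) (adj2 U) = (\<lambda>a b. s * Q a b))"

datatype gate = CNOT site site   (* control, target *)
  | CZ site site
  | Single site mat2

fun gate_op :: "gate \<Rightarrow> op" where
  "gate_op (CNOT c t) = (\<lambda>x y. if x = (if c \<in> y then flip t y else y) then 1 else 0)"
| "gate_op (CZ a b) = (\<lambda>x y. if x = y then (if a \<in> y \<and> b \<in> y then -1 else 1) else 0)"
| "gate_op (Single j U) = (\<lambda>x y. if x - {j} = y - {j} then U (j \<in> x) (j \<in> y) else 0)"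

fun gate_support :: "gate \<Rightarrow> site set" where
  "gate_support (CNOT a b) = {a, b}"
| "gate_support (CZ a b) = {a, b}"
| "gate_support (Single j U) = {j}"

fun valid_gate :: "nat \<Rightarrow> gate \<Rightarrow> bool" where
  "valid_gate L (CNOT a b) \<longleftrightarrow> a \<in> sites L \<and> b \<in> sites L \<and> adjacent a b"
| "valid_gate L (CZ a b) \<longleftrightarrow> a \<in> sites L \<and> b \<in> sites L \<and> adjacent a b"
| "valid_gate L (Single j U) \<longleftrightarrow> j \<in> sites L \<and> single_clifford U"

type_synonym layer = "gate list"

definition valid_layer :: "nat \<Rightarrow> layer \<Rightarrow> bool" where
  "valid_layer L l \<longleftrightarrow> (\<forall>g\<in>set l. valid_gate L g) \<and>
     (\<forall>i<length l. \<forall>k<length l. i \<noteq> k \<longrightarrow> gate_support (l ! i) \<inter> gate_support (l ! k) = {})"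

definition layer_op :: "nat \<Rightarrow> layer \<Rightarrow> op" where
  "layer_op L l = foldr (\<lambda>g A. opmult L (gate_op g) A) l op_id"

text \<open>A circuit is a list of layers, applied first to last; its depth is the
  number of layers.\<close>
fun circuit_op :: "nat \<Rightarrow> layer list \<Rightarrow> op" where
  "circuit_op L [] = op_id"
| "circuit_op L (l # ls) = opmult L (circuit_op L ls) (layer_op L l)"

definition valid_circuit :: "nat \<Rightarrow> layer list \<Rightarrow> bool" where
  "valid_circuit L cs \<longleftrightarrow> (\<forall>l\<in>set cs. valid_layer L l)"

definition gate_count :: "layer list \<Rightarrow> nat" where
  "gate_count cs = sum_list (map length cs)"

definition depth :: "layer list \<Rightarrow> nat" where
  "depth cs = length cs"

end

theory Submission
  imports Defs
begin


definition rep :: "nat \<Rightarrow> op \<Rightarrow> (site set \<Rightarrow> site set) \<Rightarrow> (site set \<Rightarrow> complex) \<Rightarrow> bool" where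
  "rep L A \<sigma> \<phi> \<longleftrightarrow> (\<forall>x\<in>Pow (sites L). \<forall>y\<in>Pow (sites L). A x y = (if x = \<sigma> y then \<phi> y else 0))
      \<and> (\<forall>y\<in>Pow (sites L). \<sigma> y \<in> Pow (sites L))"

lemma finite_sites[simp]: "finite (sites L)" by (simp add: sites_def)

lemma rep_opmult:
  assumes "rep L A sa pa" "rep L B sb pb"
  shows "rep L (opmult L A B) (sa \<circ> sb) (\<lambda>y. pa (sb y) * pb y)"
proof -
  { fix x y assume x: "x \<in> Pow (sites L)" and y: "y \<in> Pow (sites L)"
    have sy: "sb y \<in> Pow (sites L)" using assms(2) y unfolding rep_def by blast
    have "opmult L A B x y = (\<Sum>z\<in>Pow (sites L). (if x = sa z then pa z else 0) * (if z = sb y then pb y else 0))"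
      unfolding opmult_def using assms x y unfolding rep_def by (intro sum.cong) auto
    also have "\<dots> = (\<Sum>z\<in>Pow (sites L). if sb y = z then (if x = sa z then pa z else 0) * pb y else 0)"
      by (intro sum.cong) auto
    also have "\<dots> = (if x = sa (sb y) then pa (sb y) else 0) * pb y"
      using sy by (simp add: sum.delta)
    finally have "opmult L A B x y = (if x = (sa \<circ> sb) y then pa (sb y) * pb y else 0)" by simp }
  moreover have "\<forall>y\<in>Pow (sites L). (sa \<circ> sb) y \<in> Pow (sites L)" using assms unfolding rep_def by auto
  ultimately show ?thesis unfolding rep_def by blast
qed

lemma rep_cong: "rep L A s p \<Longrightarrow> (\<forall>y\<in>Pow (sites L). s y = s' y \<and> p y = p' y) \<Longrightarrow> rep L A s' p'"
  unfolding rep_def by auto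

fun gs :: "gate \<Rightarrow> site set \<Rightarrow> site set" where
  "gs (CNOT c t) y = (if c \<in> y then flip t y else y)"
| "gs (CZ a b) y = y"
| "gs (Single j U) y = y"

fun gn :: "gate \<Rightarrow> site set \<Rightarrow> nat" where
  "gn (CNOT c t) y = 0"
| "gn (CZ a b) y = (if a \<in> y \<and> b \<in> y then 1 else 0)"
| "gn (Single j U) y = 0"

fun is_single :: "gate \<Rightarrow> bool" where
  "is_single (Single j U) = True"
| "is_single _ = False"

lemma rep_gate: "valid_gate L g \<Longrightarrow> \<not> is_single g \<Longrightarrow> rep L (gate_op g) (gs g) (\<lambda>y. (-1)^gn g y)"
  by (cases g) (auto simp: rep_def flip_def)

definition lay_s :: "layer \<Rightarrow> site set \<Rightarrow> site set" where
  "lay_s l = foldr (\<lambda>g f. gs g \<circ> f) l id"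

lemma lay_s_simps[simp]: "lay_s [] = id" "lay_s (g # l) = gs g \<circ> lay_s l"
  by (auto simp: lay_s_def)

fun lay_n :: "layer \<Rightarrow> site set \<Rightarrow> nat" where
  "lay_n [] y = 0"
| "lay_n (g # l) y = lay_n l y + gn g (lay_s l y)"

lemma rep_id: "rep L op_id id (\<lambda>_. 1)"
  by (auto simp: rep_def op_id_def)

lemma rep_layer: "\<forall>g\<in>set l. valid_gate L g \<and> \<not> is_single g \<Longrightarrow>
   rep L (layer_op L l) (lay_s l) (\<lambda>y. (-1)^lay_n l y)"
proof (induction l)
  case Nil
  then show ?case by (auto simp: rep_def op_id_def layer_op_def)
next
  case (Cons g l)
  have "rep L (opmult L (gate_op g) (layer_op L l)) (gs g \<circ> lay_s l)
          (\<lambda>y. (-1)^gn g (lay_s l y) * (-1)^lay_n l y)"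
    using Cons by (intro rep_opmult rep_gate) auto
  moreover have "layer_op L (g # l) = opmult L (gate_op g) (layer_op L l)" by (simp add: layer_op_def)
  ultimately show ?case
    by (auto intro: rep_cong simp: power_add mult.commute)
qed

fun circ_s :: "layer list \<Rightarrow> site set \<Rightarrow> site set" where
  "circ_s [] = id"
| "circ_s (l # ls) = circ_s ls \<circ> lay_s l"

fun circ_n :: "layer list \<Rightarrow> site set \<Rightarrow> nat" where
  "circ_n [] y = 0"
| "circ_n (l # ls) y = lay_n l y + circ_n ls (lay_s l y)"

lemma rep_circ: "\<forall>l\<in>set cs. \<forall>g\<in>set l. valid_gate L g \<and> \<not> is_single g \<Longrightarrow>
   rep L (circuit_op L cs) (circ_s cs) (\<lambda>y. (-1)^circ_n cs y)"
proof (induction cs)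
  case Nil
  then show ?case by (auto simp: rep_def op_id_def)
next
  case (Cons l ls)
  have "rep L (opmult L (circuit_op L ls) (layer_op L l)) (circ_s ls \<circ> lay_s l)
          (\<lambda>y. (-1)^circ_n ls (lay_s l y) * (-1)^lay_n l y)"
    using Cons by (intro rep_opmult rep_layer) auto
  then show ?case
    by (auto intro: rep_cong simp: power_add mult.commute)
qed

lemma circ_append: "circ_s (a @ b) = circ_s b \<circ> circ_s a"
  "circ_n (a @ b) y = circ_n a y + circ_n b (circ_s a y)"
  by (induction a arbitrary: y) auto

definition lin :: "nat \<Rightarrow> (site \<Rightarrow> site set) \<Rightarrow> site set \<Rightarrow> site set" where
  "lin L F y = {q \<in> sites L. odd (card (F q \<inter> y))}"

definition sim :: "nat \<Rightarrow> layer list \<Rightarrow> (site \<Rightarrow> site set) \<Rightarrow> (site \<Rightarrow> site set) \<Rightarrow> (site set \<Rightarrow> nat) \<Rightarrow> bool" where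
  "sim L cs F G n \<longleftrightarrow> (\<forall>y. y \<subseteq> sites L \<longrightarrow> circ_s cs (lin L F y) = lin L G y \<and> circ_n cs (lin L F y) = n y)"

lemma sim_append: "sim L a F G n \<Longrightarrow> sim L b G H m \<Longrightarrow> sim L (a @ b) F H (\<lambda>y. n y + m y)"
  unfolding sim_def by (auto simp: circ_append)

lemma sim_Nil: "sim L [] F F (\<lambda>_. 0)"
  unfolding sim_def by auto

lemma lin_cong: "\<forall>q\<in>sites L. F q = G q \<Longrightarrow> lin L F y = lin L G y"
  unfolding lin_def by auto

lemma sim_cong: "sim L cs F G n \<Longrightarrow> \<forall>q\<in>sites L. F q = F' q \<Longrightarrow> \<forall>q\<in>sites L. G q = G' q
   \<Longrightarrow> (\<forall>y. y \<subseteq> sites L \<longrightarrow> n y = n' y) \<Longrightarrow> sim L cs F' G' n'"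
  unfolding sim_def using lin_cong by metis

lemma sim_single: "(\<forall>y. y \<subseteq> sites L \<longrightarrow> lay_s l (lin L F y) = lin L G y \<and> lay_n l (lin L F y) = n y)
   \<Longrightarrow> sim L [l] F G n"
  unfolding sim_def by auto

definition sd :: "'a set \<Rightarrow> 'a set \<Rightarrow> 'a set" where "sd A B = (A - B) \<union> (B - A)"

lemma card_sd: "finite A \<Longrightarrow> finite B \<Longrightarrow> card (sd A B) + 2 * card (A \<inter> B) = card A + card B"
proof -
  assume f: "finite A" "finite B"
  have "sd A B = (A \<union> B) - (A \<inter> B)" unfolding sd_def by auto
  hence "card (sd A B) = card (A \<union> B) - card (A \<inter> B)" using f by (simp add: card_Diff_subset Int_lower1 le_supI1)
  moreover have "card (A \<union> B) + card (A \<inter> B) = card A + card B" using f by (rule card_Un_Int[symmetric])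
  moreover have "card (A \<inter> B) \<le> card (A \<union> B)" using f by (intro card_mono) auto
  ultimately show ?thesis by simp
qed

lemma odd_card_sd: "finite A \<Longrightarrow> finite B \<Longrightarrow> odd (card (sd A B)) \<longleftrightarrow> (odd (card A) \<noteq> odd (card B))"
  using card_sd[of A B] by (metis even_add even_mult_iff even_numeral)

lemma sd_inter: "sd A B \<inter> y = sd (A \<inter> y) (B \<inter> y)"
  unfolding sd_def by auto

lemma odd_sd_y: "finite y \<Longrightarrow> odd (card (sd A B \<inter> y)) \<longleftrightarrow> (odd (card (A \<inter> y)) \<noteq> odd (card (B \<inter> y)))"
  by (simp add: sd_inter odd_card_sd)

lemma finite_sub_sites: "y \<subseteq> sites L \<Longrightarrow> finite y"
  using finite_sites finite_subset by blast

lemma cx_list: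
  assumes "distinct ts" "set ts \<subseteq> sites L" "\<forall>t\<in>set ts. ctl t \<in> sites L \<and> ctl t \<notin> set ts" "y \<subseteq> sites L"
  shows "lay_s (map (\<lambda>t. CNOT (ctl t) t) ts) (lin L F y)
           = lin L (\<lambda>q. if q \<in> set ts then sd (F q) (F (ctl q)) else F q) y"
  using assms
proof (induction ts)
  case Nil
  then show ?case by (simp add: lin_def)
next
  case (Cons t ts)
  define F1 where "F1 = (\<lambda>q. if q \<in> set ts then sd (F q) (F (ctl q)) else F q)"
  have IH: "lay_s (map (\<lambda>t. CNOT (ctl t) t) ts) (lin L F y) = lin L F1 y"
    using Cons unfolding F1_def by auto
  have fy: "finite y" using Cons(5) finite_sub_sites by blast
  have t: "t \<notin> set ts" "t \<in> sites L" "ctl t \<in> sites L" "ctl t \<notin> set ts" "ctl t \<noteq> t"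
    using Cons by auto
  have c_in: "ctl t \<in> lin L F1 y \<longleftrightarrow> odd (card (F (ctl t) \<inter> y))"
    using t unfolding lin_def F1_def by auto
  show ?case
  proof (rule set_eqI)
    fix q
    show "q \<in> lay_s (map (\<lambda>t. CNOT (ctl t) t) (t # ts)) (lin L F y) \<longleftrightarrow>
          q \<in> lin L (\<lambda>q. if q \<in> set (t # ts) then sd (F q) (F (ctl q)) else F q) y"
    proof (cases "q = t")
      case True
      then show ?thesis using IH c_in t fy
        by (auto simp: flip_def lin_def F1_def odd_sd_y)
    next
      case False
      then show ?thesis using IH c_in t fy
        by (auto simp: flip_def lin_def F1_def)
    qed
  qed
qed

lemma cx_list_n: "lay_n (map (\<lambda>t. CNOT (ctl t) t) ts) z = 0"
  by (induction ts arbitrary: z) auto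

lemma cz_list_s: "lay_s (map (\<lambda>q. CZ (u q) (v q)) ts) = id"
  by (induction ts) auto

lemma cz_list_n: "distinct ts \<Longrightarrow> lay_n (map (\<lambda>q. CZ (u q) (v q)) ts) z = card {q \<in> set ts. u q \<in> z \<and> v q \<in> z}"
proof (induction ts)
  case Nil
  then show ?case by simp
next
  case (Cons t ts)
  have "{q \<in> set (t # ts). u q \<in> z \<and> v q \<in> z} =
        (if u t \<in> z \<and> v t \<in> z then insert t {q \<in> set ts. u q \<in> z \<and> v q \<in> z} else {q \<in> set ts. u q \<in> z \<and> v q \<in> z})"
    by auto
  then show ?case using Cons by (simp add: cz_list_s)
qed

definition sl :: "nat \<Rightarrow> site list" where "sl L = List.product [0..<L] [0..<L]"

lemma set_sl[simp]: "set (sl L) = sites L" by (auto simp: sl_def sites_def)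
lemma distinct_sl[simp]: "distinct (sl L)" by (simp add: sl_def distinct_product)
lemma length_sl[simp]: "length (sl L) = L * L" by (simp add: sl_def)

definition cxl :: "nat \<Rightarrow> (site \<Rightarrow> bool) \<Rightarrow> (site \<Rightarrow> site) \<Rightarrow> layer" where
  "cxl L T ctl = map (\<lambda>t. CNOT (ctl t) t) (filter T (sl L))"

definition czl :: "nat \<Rightarrow> (site \<Rightarrow> bool) \<Rightarrow> (site \<Rightarrow> site) \<Rightarrow> (site \<Rightarrow> site) \<Rightarrow> layer" where
  "czl L T u v = map (\<lambda>q. CZ (u q) (v q)) (filter T (sl L))"

definition upd :: "(site \<Rightarrow> bool) \<Rightarrow> (site \<Rightarrow> site) \<Rightarrow> (site \<Rightarrow> site set) \<Rightarrow> site \<Rightarrow> site set" where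
  "upd T ctl F q = (if T q then sd (F q) (F (ctl q)) else F q)"

lemma sim_cxl:
  assumes "\<forall>t\<in>sites L. T t \<longrightarrow> ctl t \<in> sites L \<and> \<not> T (ctl t)"
  shows "sim L [cxl L T ctl] F (upd T ctl F) (\<lambda>_. 0)"
proof (rule sim_single, intro allI impI conjI)
  fix y assume y: "y \<subseteq> sites L"
  have "lay_s (cxl L T ctl) (lin L F y) = lin L (\<lambda>q. if q \<in> set (filter T (sl L)) then sd (F q) (F (ctl q)) else F q) y"
    unfolding cxl_def using assms y by (intro cx_list) auto
  also have "\<dots> = lin L (upd T ctl F) y"
    by (rule lin_cong) (auto simp: upd_def)
  finally show "lay_s (cxl L T ctl) (lin L F y) = lin L (upd T ctl F) y" .
  show "lay_n (cxl L T ctl) (lin L F y) = 0" unfolding cxl_def by (rule cx_list_n)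
qed

lemma sim_czl:
  assumes "\<forall>q\<in>sites L. T q \<longrightarrow> u q \<in> sites L \<and> v q \<in> sites L"
  shows "sim L [czl L T u v] F F
     (\<lambda>y. card {q \<in> sites L. T q \<and> odd (card (F (u q) \<inter> y)) \<and> odd (card (F (v q) \<inter> y))})"
proof (rule sim_single, intro allI impI conjI)
  fix y assume y: "y \<subseteq> sites L"
  show "lay_s (czl L T u v) (lin L F y) = lin L F y" unfolding czl_def by (simp add: cz_list_s)
  have "lay_n (czl L T u v) (lin L F y) = card {q \<in> set (filter T (sl L)). u q \<in> lin L F y \<and> v q \<in> lin L F y}"
    unfolding czl_def by (rule cz_list_n) simp
  also have "\<dots> = card {q \<in> sites L. T q \<and> odd (card (F (u q) \<inter> y)) \<and> odd (card (F (v q) \<inter> y))}"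
    using assms by (intro arg_cong[where f=card]) (auto simp: lin_def)
  finally show "lay_n (czl L T u v) (lin L F y) = card {q \<in> sites L. T q \<and> odd (card (F (u q) \<inter> y)) \<and> odd (card (F (v q) \<inter> y))}" .
qed

lemma upd_upd: "\<forall>t. T t \<longrightarrow> \<not> T (ctl t) \<Longrightarrow> upd T ctl (upd T ctl F) = F"
  by (rule ext) (auto simp: upd_def sd_def)

lemma valid_layer_map:
  assumes "distinct xs" "\<forall>a\<in>set xs. valid_gate L (g a)"
    "\<forall>a\<in>set xs. \<forall>b\<in>set xs. a \<noteq> b \<longrightarrow> gate_support (g a) \<inter> gate_support (g b) = {}"
  shows "valid_layer L (map g xs)"
  unfolding valid_layer_def
proof (intro conjI allI impI ballI)
  fix h assume "h \<in> set (map g xs)" then show "valid_gate L h" using assms by auto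
next
  fix i k assume "i < length (map g xs)" "k < length (map g xs)" "i \<noteq> k"
  then show "gate_support (map g xs ! i) \<inter> gate_support (map g xs ! k) = {}"
    using assms by (simp add: nth_eq_iff_index_eq)
qed

lemma valid_cxl:
  assumes "\<forall>t\<in>sites L. T t \<longrightarrow> ctl t \<in> sites L \<and> adjacent (ctl t) t"
    "\<forall>t\<in>sites L. \<forall>t'\<in>sites L. T t \<longrightarrow> T t' \<longrightarrow> t \<noteq> t' \<longrightarrow> {ctl t, t} \<inter> {ctl t', t'} = {}"
  shows "valid_layer L (cxl L T ctl)"
  unfolding cxl_def using assms by (intro valid_layer_map) auto

lemma valid_czl:
  assumes "\<forall>t\<in>sites L. T t \<longrightarrow> u t \<in> sites L \<and> v t \<in> sites L \<and> adjacent (u t) (v t)"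
    "\<forall>t\<in>sites L. \<forall>t'\<in>sites L. T t \<longrightarrow> T t' \<longrightarrow> t \<noteq> t' \<longrightarrow> {u t, v t} \<inter> {u t', v t'} = {}"
  shows "valid_layer L (czl L T u v)"
  unfolding czl_def using assms by (intro valid_layer_map) auto

lemma nosingle_cxl: "\<forall>g\<in>set (cxl L T ctl). \<not> is_single g" by (auto simp: cxl_def)
lemma nosingle_czl: "\<forall>g\<in>set (czl L T u v). \<not> is_single g" by (auto simp: czl_def)



definition pre :: "nat list \<Rightarrow> nat \<Rightarrow> nat" where "pre ws j = sum_list (take j ws)"
definition sa :: "nat list \<Rightarrow> nat \<Rightarrow> nat" where "sa ws c = pre ws (strip_index ws c)"
definition sw :: "nat list \<Rightarrow> nat \<Rightarrow> nat" where "sw ws c = ws ! strip_index ws c"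
definition off :: "nat list \<Rightarrow> nat \<Rightarrow> nat" where "off ws c = c - sa ws c"

lemma pre_Suc: "j < length ws \<Longrightarrow> pre ws (Suc j) = pre ws j + ws ! j"
  by (simp add: pre_def take_Suc_conv_app_nth)

lemma pre_le_Suc: "pre ws j \<le> pre ws (Suc j)"
proof (cases "j < length ws")
  case True then show ?thesis using pre_Suc[OF True] by simp
next
  case False then show ?thesis by (simp add: pre_def)
qed

lemma pre_mono: "i \<le> j \<Longrightarrow> pre ws i \<le> pre ws j"
  by (rule lift_Suc_mono_le[of "pre ws"]) (auto simp: pre_le_Suc)

lemma pre_0[simp]: "pre ws 0 = 0" by (simp add: pre_def)

lemma pre_len: "interval_partition L ws \<Longrightarrow> pre ws (length ws) = L"
  by (simp add: pre_def interval_partition_def)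

lemma pre_step: "interval_partition L ws \<Longrightarrow> j < length ws \<Longrightarrow> pre ws j < pre ws (Suc j)"
proof -
  assume ip: "interval_partition L ws" and j: "j < length ws"
  have "ws ! j \<in> set ws" using j by simp
  hence "1 \<le> ws ! j" using ip by (auto simp: interval_partition_def)
  then show ?thesis using pre_Suc[OF j] by simp
qed

lemma strip_unique:
  assumes ip: "interval_partition L ws" and j: "j < length ws" "pre ws j \<le> c" "c < pre ws (Suc j)"
  shows "strip_index ws c = j"
  unfolding strip_index_def
proof (rule the_equality)
  show "j < length ws \<and> sum_list (take j ws) \<le> c \<and> c < sum_list (take (Suc j) ws)"
    using j by (simp add: pre_def)
next
  fix j' assume h: "j' < length ws \<and> sum_list (take j' ws) \<le> c \<and> c < sum_list (take (Suc j') ws)"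
  hence h': "pre ws j' \<le> c" "c < pre ws (Suc j')" by (auto simp: pre_def)
  show "j' = j"
  proof (rule ccontr)
    assume "j' \<noteq> j"
    then consider "Suc j' \<le> j" | "Suc j \<le> j'" by linarith
    then show False
    proof cases
      case 1 then show False using pre_mono[OF 1, of ws] h' j by linarith
    next
      case 2 then show False using pre_mono[OF 2, of ws] h' j by linarith
    qed
  qed
qed

lemma strip_exists:
  assumes ip: "interval_partition L ws" and c: "c < L"
  shows "\<exists>j < length ws. pre ws j \<le> c \<and> c < pre ws (Suc j)"
proof -
  have ne: "ws \<noteq> []" using ip c by (auto simp: interval_partition_def)
  define n where "n = length ws - 1"
  have n: "Suc n = length ws" using ne unfolding n_def by simp
  have P: "c < pre ws (Suc n)" using n pre_len[OF ip] c by simp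
  define j where "j = (LEAST j. c < pre ws (Suc j))"
  have cj: "c < pre ws (Suc j)" unfolding j_def by (rule LeastI[of _ n]) (rule P)
  have jn: "j \<le> n" unfolding j_def by (rule Least_le) (rule P)
  have "pre ws j \<le> c"
  proof (cases j)
    case 0 then show ?thesis by simp
  next
    case (Suc j0)
    have "\<not> c < pre ws (Suc j0)" using Suc unfolding j_def by (metis lessI not_less_Least)
    then show ?thesis using Suc by simp
  qed
  then show ?thesis using cj jn n by (intro exI[of _ j]) auto
qed

lemma strip_props:
  assumes ip: "interval_partition L ws" and c: "c < L"
  shows "strip_index ws c < length ws" "sa ws c \<le> c" "c < sa ws c + sw ws c"
        "sa ws c + sw ws c \<le> L" "1 \<le> sw ws c"
        "sa ws c + sw ws c = pre ws (Suc (strip_index ws c))"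
proof -
  obtain j where j: "j < length ws" "pre ws j \<le> c" "c < pre ws (Suc j)"
    using strip_exists[OF ip c] by blast
  have st: "strip_index ws c = j" using strip_unique[OF ip j] .
  have e: "sa ws c + sw ws c = pre ws (Suc j)" using pre_Suc[OF j(1)] st by (simp add: sa_def sw_def)
  show "strip_index ws c < length ws" using st j by simp
  show "sa ws c \<le> c" using st j by (simp add: sa_def)
  show "c < sa ws c + sw ws c" using e j by simp
  show "sa ws c + sw ws c \<le> L" using e pre_mono[of "Suc j" "length ws" ws] j pre_len[OF ip] by simp
  show "1 \<le> sw ws c" using ip j st by (auto simp: sw_def interval_partition_def)
  show "sa ws c + sw ws c = pre ws (Suc (strip_index ws c))" using e st by simp
qed

lemma same_strip:
  assumes ip: "interval_partition L ws" and c: "c < L" and h: "sa ws c \<le> c'" "c' \<le> c"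
  shows "strip_index ws c' = strip_index ws c" "sa ws c' = sa ws c" "sw ws c' = sw ws c"
proof -
  let ?j = "strip_index ws c"
  have j: "?j < length ws" "pre ws ?j \<le> c'" "c' < pre ws (Suc ?j)"
    using strip_props(1,3,6)[OF ip c] h unfolding sa_def by auto
  have "strip_index ws c' = ?j" by (rule strip_unique[OF ip j])
  then show "strip_index ws c' = strip_index ws c" "sa ws c' = sa ws c" "sw ws c' = sw ws c"
    by (auto simp: sa_def sw_def)
qed

lemma st_mono:
  assumes ip: "interval_partition L ws" and cc: "c \<le> c'" and c': "c' < L"
  shows "strip_index ws c \<le> strip_index ws c'"
proof (rule ccontr)
  assume "\<not> ?thesis"
  hence "Suc (strip_index ws c') \<le> strip_index ws c" by simp
  hence a: "pre ws (Suc (strip_index ws c')) \<le> sa ws c" unfolding sa_def by (rule pre_mono)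
  have b: "sa ws c' + sw ws c' = pre ws (Suc (strip_index ws c'))" "c' < sa ws c' + sw ws c'"
    using strip_props(3,6)[OF ip c'] by auto
  have c: "c < L" using cc c' by simp
  have d: "sa ws c \<le> c" using strip_props(2)[OF ip c] .
  from a b d cc show False by linarith
qed

lemma st_less:
  assumes ip: "interval_partition L ws" and c: "c < L" and c': "c' < L" and st: "strip_index ws c < strip_index ws c'"
  shows "sa ws c + sw ws c \<le> sa ws c'"
proof -
  have "pre ws (Suc (strip_index ws c)) \<le> pre ws (strip_index ws c')" using st by (intro pre_mono) simp
  then show ?thesis using strip_props(6)[OF ip c] unfolding sa_def by linarith
qed

lemma off_pos:
  assumes ip: "interval_partition L ws" and c: "c < L" and o: "1 \<le> off ws c"
  shows "sa ws (c - 1) = sa ws c" "strip_index ws (c - 1) = strip_index ws c" "off ws (c - 1) = off ws c - 1"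
    "sw ws (c - 1) = sw ws c" "1 \<le> c"
proof -
  have h: "sa ws c \<le> c - 1" "c - 1 \<le> c" using o unfolding off_def by auto
  note ss = same_strip[OF ip c h]
  show "sa ws (c - 1) = sa ws c" "strip_index ws (c - 1) = strip_index ws c" "sw ws (c - 1) = sw ws c"
    using ss by auto
  show "off ws (c - 1) = off ws c - 1" using ss(2) unfolding off_def by simp
  show "1 \<le> c" using o unfolding off_def by simp
qed

lemma same_strip_iff:
  assumes ip: "interval_partition L ws" and cc: "c' < c" and c: "c < L"
  shows "strip_index ws c' = strip_index ws c \<longleftrightarrow> sa ws c \<le> c'"
proof
  assume e: "strip_index ws c' = strip_index ws c"
  have "c' < L" using cc c by simp
  then have "sa ws c' \<le> c'" using strip_props(2)[OF ip] by blast
  then show "sa ws c \<le> c'" using e unfolding sa_def by simp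
next
  assume h: "sa ws c \<le> c'" then show "strip_index ws c' = strip_index ws c"
    using same_strip(1)[OF ip c h] cc by linarith
qed

lemma boustro_eq: "boustro L ws (r, c) = L * sa ws c + sw ws c * r +
   (if even r then c - sa ws c else sw ws c - 1 - (c - sa ws c))"
  by (simp add: boustro_def sa_def sw_def pre_def Let_def)

lemma lex_lt:
  fixes w t t' r r' :: nat
  assumes "t < w" "t' < w"
  shows "(w * r + t < w * r' + t') \<longleftrightarrow> (r < r' \<or> r = r' \<and> t < t')"
proof -
  have A: "w * r + t < w * r' + t'" if "r < r'" for r r'
  proof -
    have "w * Suc r \<le> w * r'" using that by (intro mult_le_mono2) simp
    then have "w * r + w \<le> w * r'" by simp
    then show ?thesis using assms by linarith
  qed
  show ?thesis
  proof
    assume h: "w * r + t < w * r' + t'"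
    show "r < r' \<or> r = r' \<and> t < t'"
    proof (rule ccontr)
      assume "\<not> (r < r' \<or> r = r' \<and> t < t')"
      then consider "r' < r" | "r = r'" "t' \<le> t" by linarith
      then show False
      proof cases
        case 1
        have "w * Suc r' \<le> w * r" using 1 by (intro mult_le_mono2) simp
        then have "w * r' + w \<le> w * r" by simp
        then show False using h assms by linarith
      next
        case 2 then show False using h by simp
      qed
    qed
  next
    assume "r < r' \<or> r = r' \<and> t < t'"
    then show "w * r + t < w * r' + t'" using A[of r r'] by auto
  qed
qed

definition m0 :: "nat \<Rightarrow> site \<Rightarrow> nat" where "m0 L p = L * snd p + fst p"

definition Ews :: "nat list \<Rightarrow> site \<Rightarrow> site \<Rightarrow> bool" where
  "Ews ws p q \<longleftrightarrow> strip_index ws (snd p) = strip_index ws (snd q) \<and> snd p < snd q \<and>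
      (fst q < fst p \<or> (fst p = fst q \<and> odd (fst p)))"

lemma boustro_cross:
  assumes ip: "interval_partition L ws" and r: "r < L" and c: "c < L" "c' < L"
    and st: "strip_index ws c < strip_index ws c'"
  shows "boustro L ws (r, c) < boustro L ws (r', c')"
proof -
  let ?a = "sa ws c" and ?w = "sw ws c"
  have p: "?a \<le> c" "c < ?a + ?w" "1 \<le> ?w" using strip_props[OF ip c(1)] by auto
  have t: "(if even r then c - ?a else ?w - 1 - (c - ?a)) < ?w" using p by auto
  have "?w * Suc r \<le> ?w * L" using r by (intro mult_le_mono2) simp
  hence "?w * r + ?w \<le> ?w * L" by simp
  hence "boustro L ws (r, c) < L * ?a + ?w * L" using t by (simp add: boustro_eq)
  also have "\<dots> = L * (?a + ?w)" by (simp add: algebra_simps)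
  also have "\<dots> \<le> L * sa ws c'" using st_less[OF ip c st] by (intro mult_le_mono2)
  also have "\<dots> \<le> boustro L ws (r', c')" by (simp add: boustro_eq)
  finally show ?thesis .
qed



lemma t_lt:
  fixes a c w r :: nat
  assumes "a \<le> c" "c < a + w"
  shows "(if even r then c - a else w - 1 - (c - a)) < w"
  using assms by (cases "even r") auto

lemma t_cmp:
  fixes a c c' w r :: nat
  assumes "a \<le> c" "c < a + w" "a \<le> c'" "c' < a + w"
  shows "((if even r then c - a else w - 1 - (c - a)) < (if even r then c' - a else w - 1 - (c' - a)))
          \<longleftrightarrow> (even r \<and> c < c' \<or> odd r \<and> c' < c)"
  using assms by (cases "even r") auto

lemma inv_char:
  assumes ip: "interval_partition L ws" and p: "p \<in> sites L" and q: "q \<in> sites L" and pq: "p \<noteq> q"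
  shows "((boustro L ws p < boustro L ws q) \<noteq> (m0 L p < m0 L q)) \<longleftrightarrow> (Ews ws p q \<or> Ews ws q p)"
proof -
  obtain r c where pr: "p = (r, c)" by (cases p)
  obtain r' c' where qr: "q = (r', c')" by (cases q)
  have rc: "r < L" "c < L" "r' < L" "c' < L" using p q pr qr by (auto simp: sites_def)
  have m0: "m0 L p < m0 L q \<longleftrightarrow> (c < c' \<or> c = c' \<and> r < r')"
    using lex_lt[of r L r' c c'] rc pr qr by (simp add: m0_def)
  consider (lt) "strip_index ws c < strip_index ws c'" | (gt) "strip_index ws c' < strip_index ws c"
    | (eq) "strip_index ws c = strip_index ws c'" by linarith
  then show ?thesis
  proof cases
    case lt
    have b: "boustro L ws p < boustro L ws q" using boustro_cross[OF ip rc(1,2,4) lt] pr qr by simp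
    have "c < c'"
    proof (rule ccontr)
      assume "\<not> c < c'" then have "c' \<le> c" by simp
      then show False using st_mono[OF ip _ rc(2)] lt by fastforce
    qed
    then show ?thesis using m0 b lt by (auto simp: Ews_def pr qr)
  next
    case gt
    have b: "boustro L ws q < boustro L ws p" using boustro_cross[OF ip rc(3,4,2) gt] pr qr by simp
    have "c' < c"
    proof (rule ccontr)
      assume "\<not> c' < c" then have "c \<le> c'" by simp
      then show False using st_mono[OF ip _ rc(4)] gt by fastforce
    qed
    then show ?thesis using m0 b gt by (auto simp: Ews_def pr qr)
  next
    case eq
    define a where "a = sa ws c"
    define w where "w = sw ws c"
    have a': "sa ws c' = a" "sw ws c' = w" using eq unfolding a_def w_def sa_def sw_def by auto
    have bc: "a \<le> c" "c < a + w" using strip_props(2,3)[OF ip rc(2)] unfolding a_def w_def by auto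
    have bc': "a \<le> c'" "c' < a + w" using strip_props(2,3)[OF ip rc(4)] a' by auto
    define t where "t = (if even r then c - a else w - 1 - (c - a))"
    define t' where "t' = (if even r' then c' - a else w - 1 - (c' - a))"
    have tw: "t < w" "t' < w" unfolding t_def t'_def using bc bc' by auto
    have bp: "boustro L ws p = L * a + (w * r + t)" using pr by (simp add: boustro_eq a_def w_def t_def)
    have bq: "boustro L ws q = L * a + (w * r' + t')" using qr a' by (simp add: boustro_eq t'_def)
    have B: "boustro L ws p < boustro L ws q \<longleftrightarrow> (r < r' \<or> r = r' \<and> t < t')"
      using lex_lt[OF tw, of r r'] bp bq by simp
    have T: "t < t' \<longleftrightarrow> (even r \<and> c < c' \<or> odd r \<and> c' < c)" if e: "r = r'"
      using t_cmp[OF bc bc', of r] unfolding t_def t'_def e[symmetric] by simp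
    have ne: "r = r' \<Longrightarrow> c \<noteq> c'" using pq pr qr by auto
    have E1: "Ews ws p q \<longleftrightarrow> c < c' \<and> (r' < r \<or> r = r' \<and> odd r)" using eq pr qr by (simp add: Ews_def)
    have E2: "Ews ws q p \<longleftrightarrow> c' < c \<and> (r < r' \<or> r' = r \<and> odd r')" using eq pr qr by (simp add: Ews_def)
    show ?thesis
    proof (cases "r = r'")
      case True
      then show ?thesis using B T ne m0 E1 E2 by auto
    next
      case False
      then show ?thesis using B m0 E1 E2 by auto
    qed
  qed
qed

definition Sset :: "nat \<Rightarrow> (site \<Rightarrow> nat) \<Rightarrow> site \<Rightarrow> site set" where
  "Sset L m j = {k \<in> sites L. m k < m j}"

lemma sd_S:
  assumes ip: "interval_partition L ws" and j: "j \<in> sites L"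
  shows "sd (Sset L (boustro L ws) j) (Sset L (m0 L) j) = {k \<in> sites L. k \<noteq> j \<and> (Ews ws k j \<or> Ews ws j k)}"
proof (rule set_eqI)
  fix k
  show "k \<in> sd (Sset L (boustro L ws) j) (Sset L (m0 L) j) \<longleftrightarrow> k \<in> {k \<in> sites L. k \<noteq> j \<and> (Ews ws k j \<or> Ews ws j k)}"
  proof (cases "k \<in> sites L \<and> k \<noteq> j")
    case True
    then show ?thesis using inv_char[OF ip _ j, of k] unfolding sd_def Sset_def by auto
  next
    case False
    then show ?thesis unfolding sd_def Sset_def by auto
  qed
qed

definition Rs :: "nat list \<Rightarrow> site \<Rightarrow> site set" where
  "Rs ws q = {p. fst p = fst q \<and> odd (fst q) \<and> sa ws (snd q) \<le> snd p \<and> snd p < snd q}"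

definition Qs :: "nat \<Rightarrow> nat list \<Rightarrow> site \<Rightarrow> site set" where
  "Qs L ws q = {p. fst q < fst p \<and> fst p < L \<and> sa ws (snd q) \<le> snd p \<and> snd p < snd q}"

lemma Ews_iff:
  assumes ip: "interval_partition L ws" and p: "p \<in> sites L" and q: "q \<in> sites L"
  shows "Ews ws p q \<longleftrightarrow> p \<in> Rs ws q \<or> p \<in> Qs L ws q"
proof (cases "snd p < snd q")
  case True
  have "snd q < L" using q by (auto simp: sites_def)
  then have "strip_index ws (snd p) = strip_index ws (snd q) \<longleftrightarrow> sa ws (snd q) \<le> snd p"
    using same_strip_iff[OF ip True] by simp
  moreover have "fst p < L" using p by (auto simp: sites_def)
  ultimately show ?thesis unfolding Ews_def Rs_def Qs_def using True by auto
next
  case False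
  then show ?thesis unfolding Ews_def Rs_def Qs_def by auto
qed

definition NE :: "(site \<Rightarrow> site \<Rightarrow> bool) \<Rightarrow> site set \<Rightarrow> nat" where
  "NE E y = card {pq. fst pq \<in> y \<and> snd pq \<in> y \<and> E (fst pq) (snd pq)}"

lemma NE_insert:
  assumes fy: "finite y" and j: "j \<notin> y" and irr: "\<forall>p. \<not> E p p" and asy: "\<forall>p q. E p q \<longrightarrow> \<not> E q p"
  shows "NE E (insert j y) = NE E y + card {k \<in> y. E j k \<or> E k j}"
proof -
  let ?P = "{pq. fst pq \<in> y \<and> snd pq \<in> y \<and> E (fst pq) (snd pq)}"
  let ?A = "{k \<in> y. E j k}" and ?B = "{k \<in> y. E k j}"
  have eq: "{pq. fst pq \<in> insert j y \<and> snd pq \<in> insert j y \<and> E (fst pq) (snd pq)}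
       = ?P \<union> ((\<lambda>k. (j, k)) ` ?A \<union> (\<lambda>k. (k, j)) ` ?B)"
    using irr by auto
  have fP: "finite ?P"
    by (rule finite_subset[of _ "y \<times> y"]) (use fy in auto)
  have d1: "?P \<inter> ((\<lambda>k. (j, k)) ` ?A \<union> (\<lambda>k. (k, j)) ` ?B) = {}" using j by auto
  have d2: "(\<lambda>k. (j, k)) ` ?A \<inter> (\<lambda>k. (k, j)) ` ?B = {}" using irr asy by blast
  have c1: "card ((\<lambda>k. (j, k)) ` ?A) = card ?A" by (rule card_image) (auto simp: inj_on_def)
  have c2: "card ((\<lambda>k. (k, j)) ` ?B) = card ?B" by (rule card_image) (auto simp: inj_on_def)
  have AB: "card {k \<in> y. E j k \<or> E k j} = card ?A + card ?B"
  proof -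
    have "{k \<in> y. E j k \<or> E k j} = ?A \<union> ?B" by auto
    moreover have "?A \<inter> ?B = {}" using asy by blast
    ultimately show ?thesis using fy by (simp add: card_Un_disjoint)
  qed
  have "NE E (insert j y) = card ?P + card ((\<lambda>k. (j, k)) ` ?A \<union> (\<lambda>k. (k, j)) ` ?B)"
    unfolding NE_def eq using fP fy d1 by (intro card_Un_disjoint) auto
  also have "card ((\<lambda>k. (j, k)) ` ?A \<union> (\<lambda>k. (k, j)) ` ?B) = card ?A + card ?B"
    using d2 c1 c2 fy by (subst card_Un_disjoint) auto
  finally show ?thesis using AB unfolding NE_def by simp
qed

lemma NE_flip:
  assumes fy: "finite y" and irr: "\<forall>p. \<not> E p p" and asy: "\<forall>p q. E p q \<longrightarrow> \<not> E q p"
  shows "even (NE E (flip j y) + NE E y + card {k \<in> y - {j}. E j k \<or> E k j})"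
proof -
  define C where "C = card {k \<in> y - {j}. E j k \<or> E k j}"
  have "NE E (flip j y) + NE E y = 2 * NE E (y - {j}) + C"
  proof (cases "j \<in> y")
    case True
    have y: "y = insert j (y - {j})" using True by auto
    have "NE E y = NE E (y - {j}) + C"
      unfolding C_def by (subst y) (rule NE_insert[OF _ _ irr asy], use fy in auto)
    moreover have "flip j y = y - {j}" using True by (simp add: flip_def)
    ultimately show ?thesis by simp
  next
    case False
    have "NE E (insert j y) = NE E y + card {k \<in> y. E j k \<or> E k j}"
      by (rule NE_insert[OF fy False irr asy])
    moreover have "flip j y = insert j y" "y - {j} = y" using False by (auto simp: flip_def)
    ultimately show ?thesis unfolding C_def by simp
  qed
  then have "NE E (flip j y) + NE E y + C = 2 * (NE E (y - {j}) + C)" by simp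
  then show ?thesis unfolding C_def by simp
qed

lemma Ews_irr: "\<forall>p. \<not> Ews ws p p" by (simp add: Ews_def)
lemma Ews_asy: "\<forall>p q. Ews ws p q \<longrightarrow> \<not> Ews ws q p" by (auto simp: Ews_def)

lemma even_card_sd: "finite A \<Longrightarrow> finite B \<Longrightarrow> even (card A + card B + card (sd A B))"
  using card_sd[of A B] by (metis add.commute add.left_commute even_add even_mult_iff even_numeral)



lemma zprod_eq: "finite K \<Longrightarrow> (\<Prod>k\<in>K. if k \<in> y then -1 else 1) = ((-1::complex) ^ card (K \<inter> y))"
proof (induction K rule: finite_induct)
  case empty then show ?case by simp
next
  case (insert a K)
  have "insert a K \<inter> y = (if a \<in> y then insert a (K \<inter> y) else K \<inter> y)" by auto
  then show ?case using insert by auto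
qed

lemma rep_zprod: "rep L (Zprod K) id (\<lambda>y. (-1::complex) ^ card ({k \<in> K. True} \<inter> y))" if "finite K"
  using that zprod_eq[OF that] by (auto simp: rep_def Zprod_def)

lemma rep_pauli: "j \<in> sites L \<Longrightarrow> rep L (if b then pauliY j else pauliX j) (flip j)
   (\<lambda>y. if b then (if j \<in> y then - \<i> else \<i>) else 1)"
  by (auto simp: rep_def pauliX_def pauliY_def flip_def)

lemma rep_majorana:
  assumes j: "j \<in> sites L"
  shows "rep L (majorana L m j b) (flip j)
     (\<lambda>y. (if b then (if j \<in> y then - \<i> else \<i>) else 1) * (-1::complex) ^ card (Sset L m j \<inter> y))"
proof -
  have f: "finite {k \<in> sites L. m k < m j}" by simp
  have "rep L (opmult L (if b then pauliY j else pauliX j) (Zprod {k \<in> sites L. m k < m j})) (flip j \<circ> id)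
     (\<lambda>y. (if b then (if j \<in> id y then - \<i> else \<i>) else 1) * (-1::complex) ^ card ({k \<in> {k \<in> sites L. m k < m j}. True} \<inter> y))"
    by (rule rep_opmult[OF rep_pauli[OF j] rep_zprod[OF f]])
  then show ?thesis unfolding majorana_def
    by (rule rep_cong) (auto simp: Sset_def)
qed

lemma rep_adj: "rep L A id d \<Longrightarrow> rep L (adj A) id (\<lambda>y. cnj (d y))"
  unfolding rep_def adj_def by auto

lemma neg1_pow_eq: "even (a + b) \<Longrightarrow> ((-1::complex) ^ a) = (-1) ^ b"
  by (simp add: minus_one_power_iff)

lemma conj_diag:
  assumes W: "rep L W id (\<lambda>y. (-1::complex) ^ n y)" and j: "j \<in> sites L"
   and par: "\<forall>y. y \<subseteq> sites L \<longrightarrow> even (n (flip j y) + n y + card (Sset L m j \<inter> y) + card (Sset L m' j \<inter> y))"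
  shows "op_eq L (opmult L (opmult L W (majorana L m j b)) (adj W)) (majorana L m' j b)"
proof -
  let ?py = "\<lambda>y. (if b then (if j \<in> y then - \<i> else \<i>) else 1 :: complex)"
  have r1: "rep L (opmult L W (majorana L m j b)) (id \<circ> flip j)
     (\<lambda>y. (-1::complex) ^ n (flip j y) * (?py y * (-1) ^ card (Sset L m j \<inter> y)))"
    by (rule rep_opmult[OF W rep_majorana[OF j]])
  have r2: "rep L (opmult L (opmult L W (majorana L m j b)) (adj W)) ((id \<circ> flip j) \<circ> id)
     (\<lambda>y. ((-1::complex) ^ n (flip j (id y)) * (?py (id y) * (-1) ^ card (Sset L m j \<inter> id y))) * cnj ((-1) ^ n y))"
    by (rule rep_opmult[OF r1 rep_adj[OF W]])
  have r3: "rep L (majorana L m' j b) (flip j) (\<lambda>y. ?py y * (-1::complex) ^ card (Sset L m' j \<inter> y))"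
    by (rule rep_majorana[OF j])
  show ?thesis unfolding op_eq_def
  proof (intro ballI)
    fix x y assume x: "x \<in> Pow (sites L)" and y: "y \<in> Pow (sites L)"
    have e: "even (n (flip j y) + card (Sset L m j \<inter> y) + n y + card (Sset L m' j \<inter> y))"
      using par y by (simp add: algebra_simps)
    have ph: "(-1::complex) ^ n (flip j y) * (?py y * (-1) ^ card (Sset L m j \<inter> y)) * cnj ((-1) ^ n y)
        = ?py y * (-1) ^ card (Sset L m' j \<inter> y)"
    proof -
      have "(-1::complex) ^ n (flip j y) * (?py y * (-1) ^ card (Sset L m j \<inter> y)) * cnj ((-1) ^ n y)
          = ?py y * ((-1) ^ (n (flip j y) + card (Sset L m j \<inter> y) + n y))"
        by (simp add: power_add)
      also have "(-1::complex) ^ (n (flip j y) + card (Sset L m j \<inter> y) + n y) = (-1) ^ card (Sset L m' j \<inter> y)"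
        by (rule neg1_pow_eq) (use e in \<open>simp add: algebra_simps\<close>)
      finally show ?thesis .
    qed
    have l: "opmult L (opmult L W (majorana L m j b)) (adj W) x y = (if x = flip j y then
       (-1::complex) ^ n (flip j y) * (?py y * (-1) ^ card (Sset L m j \<inter> y)) * cnj ((-1) ^ n y) else 0)"
      using r2[unfolded rep_def, THEN conjunct1, rule_format, OF x y] by simp
    have r: "majorana L m' j b x y = (if x = flip j y then ?py y * (-1::complex) ^ card (Sset L m' j \<inter> y) else 0)"
      using r3[unfolded rep_def, THEN conjunct1, rule_format, OF x y] by simp
    show "opmult L (opmult L W (majorana L m j b)) (adj W) x y = majorana L m' j b x y"
      unfolding l r using ph by simp
  qed
qed

lemma maps_enc_diag:
  assumes W: "rep L W id (\<lambda>y. (-1::complex) ^ n y)"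
   and par: "\<forall>j\<in>sites L. \<forall>y. y \<subseteq> sites L \<longrightarrow> even (n (flip j y) + n y + card (Sset L m j \<inter> y) + card (Sset L m' j \<inter> y))"
  shows "maps_encoding L W m m'"
  unfolding maps_encoding_def Sset_def
  using conj_diag[OF W] par unfolding Sset_def by blast

lemma flip_sub: "j \<in> sites L \<Longrightarrow> y \<subseteq> sites L \<Longrightarrow> flip j y \<subseteq> sites L"
  by (auto simp: flip_def)

lemma parity_main:
  assumes ip: "interval_partition L ws" and ip': "interval_partition L ws'" and j: "j \<in> sites L"
    and y: "y \<subseteq> sites L"
    and nE: "\<forall>y. y \<subseteq> sites L \<longrightarrow> even (n y + NE (Ews ws) y + NE (Ews ws') y)"
  shows "even (n (flip j y) + n y + card (Sset L (boustro L ws) j \<inter> y) + card (Sset L (boustro L ws') j \<inter> y))"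
proof -
  have fy: "finite y" using y finite_sub_sites by blast
  have e1: "even (n (flip j y) + NE (Ews ws) (flip j y) + NE (Ews ws') (flip j y))"
    using nE flip_sub[OF j y] by blast
  have e2: "even (n y + NE (Ews ws) y + NE (Ews ws') y)" using nE y by blast
  define A where "A = {k \<in> y - {j}. Ews ws j k \<or> Ews ws k j}"
  define A' where "A' = {k \<in> y - {j}. Ews ws' j k \<or> Ews ws' k j}"
  have f1: "even (NE (Ews ws) (flip j y) + NE (Ews ws) y + card A)"
    unfolding A_def by (rule NE_flip[OF fy Ews_irr Ews_asy])
  have f2: "even (NE (Ews ws') (flip j y) + NE (Ews ws') y + card A')"
    unfolding A'_def by (rule NE_flip[OF fy Ews_irr Ews_asy])
  have sA: "sd (Sset L (boustro L ws) j) (Sset L (m0 L) j) \<inter> y = A"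
    unfolding sd_S[OF ip j] A_def using y by auto
  have sA': "sd (Sset L (boustro L ws') j) (Sset L (m0 L) j) \<inter> y = A'"
    unfolding sd_S[OF ip' j] A'_def using y by auto
  have g1: "even (card (Sset L (boustro L ws) j \<inter> y) + card (Sset L (m0 L) j \<inter> y) + card A)"
    using even_card_sd[of "Sset L (boustro L ws) j \<inter> y" "Sset L (m0 L) j \<inter> y"] fy sA
    by (simp add: sd_inter)
  have g2: "even (card (Sset L (boustro L ws') j \<inter> y) + card (Sset L (m0 L) j \<inter> y) + card A')"
    using even_card_sd[of "Sset L (boustro L ws') j \<inter> y" "Sset L (m0 L) j \<inter> y"] fy sA'
    by (simp add: sd_inter)
  from e1 e2 f1 f2 g1 g2 show ?thesis by presburger
qed



definition hctl :: "site \<Rightarrow> site" where "hctl t = (fst t, snd t - 1)"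

definition Hset :: "nat list \<Rightarrow> site \<Rightarrow> site set" where
  "Hset ws t = {p. fst p = fst t \<and> sa ws (snd t) \<le> snd p \<and> snd p \<le> snd t}"

definition Pset :: "nat \<Rightarrow> nat list \<Rightarrow> site \<Rightarrow> site set" where
  "Pset L ws t = {p. fst t \<le> fst p \<and> fst p < L \<and> sa ws (snd t) \<le> snd p \<and> snd p \<le> snd t}"

definition HF :: "nat list \<Rightarrow> nat \<Rightarrow> site \<Rightarrow> site set" where
  "HF ws k t = (if off ws (snd t) \<le> k then Hset ws t else {t})"

definition VF :: "nat \<Rightarrow> nat list \<Rightarrow> nat \<Rightarrow> site \<Rightarrow> site set" where
  "VF L ws j t = (if j \<le> fst t then Pset L ws t else Hset ws t)"

definition Hk :: "nat \<Rightarrow> nat list \<Rightarrow> nat \<Rightarrow> layer list" where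
  "Hk L ws k = [czl L (\<lambda>t. off ws (snd t) = k \<and> odd (fst t)) (\<lambda>t. t) hctl,
                cxl L (\<lambda>t. off ws (snd t) = k) hctl]"

definition Vl :: "nat \<Rightarrow> nat \<Rightarrow> layer" where
  "Vl L k = cxl L (\<lambda>t. fst t = k) (\<lambda>t. (Suc (fst t), snd t))"

definition nHk :: "nat \<Rightarrow> nat list \<Rightarrow> nat \<Rightarrow> site set \<Rightarrow> nat" where
  "nHk L ws k y = card {t \<in> sites L. 1 \<le> off ws (snd t) \<and> off ws (snd t) \<le> k \<and> odd (fst t) \<and> t \<in> y
      \<and> odd (card (Hset ws (hctl t) \<inter> y))}"

lemma sim_cong_out: "sim L cs F G n \<Longrightarrow> \<forall>q\<in>sites L. G q = G' q \<Longrightarrow> sim L cs F G' n"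
  using sim_cong[of L cs F G n F G' n] by auto

lemma sim_cong_in: "sim L cs F G n \<Longrightarrow> \<forall>q\<in>sites L. F q = F' q \<Longrightarrow> sim L cs F' G n"
  using sim_cong[of L cs F G n F' G n] by auto

lemma sim_cong_n: "sim L cs F G n \<Longrightarrow> (\<forall>y. y \<subseteq> sites L \<longrightarrow> n y = n' y) \<Longrightarrow> sim L cs F G n'"
  using sim_cong[of L cs F G n F G n'] by auto

lemma sites_iff: "t \<in> sites L \<longleftrightarrow> fst t < L \<and> snd t < L"
  by (cases t) (auto simp: sites_def)

lemma off_le: "off ws c \<le> c" by (simp add: off_def)

lemma hctl_props:
  assumes ip: "interval_partition L ws" and t: "t \<in> sites L" and o: "1 \<le> off ws (snd t)"
  shows "hctl t \<in> sites L" "off ws (snd (hctl t)) = off ws (snd t) - 1"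
    "sa ws (snd (hctl t)) = sa ws (snd t)" "1 \<le> snd t" "hctl t \<noteq> t"
proof -
  have c: "snd t < L" using t by (simp add: sites_iff)
  note op = off_pos[OF ip c o]
  show "hctl t \<in> sites L" using t op(5) by (auto simp: hctl_def sites_iff)
  show "off ws (snd (hctl t)) = off ws (snd t) - 1" using op by (simp add: hctl_def)
  show "sa ws (snd (hctl t)) = sa ws (snd t)" using op by (simp add: hctl_def)
  show "1 \<le> snd t" using op by simp
  then show "hctl t \<noteq> t" by (cases t) (auto simp: hctl_def)
qed

lemma Hset_single:
  assumes ip: "interval_partition L ws" and t: "t \<in> sites L" and o: "off ws (snd t) = 0"
  shows "Hset ws t = {t}"
proof -
  have "sa ws (snd t) \<le> snd t" using strip_props(2)[OF ip] t by (simp add: sites_iff)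
  then have "sa ws (snd t) = snd t" using o by (simp add: off_def)
  then show ?thesis by (cases t) (auto simp: Hset_def)
qed

lemma Hset_step:
  assumes ip: "interval_partition L ws" and t: "t \<in> sites L" and o: "1 \<le> off ws (snd t)"
  shows "Hset ws t = insert t (Hset ws (hctl t))" "t \<notin> Hset ws (hctl t)"
proof -
  note h = hctl_props[OF ip t o]
  have "sa ws (snd t) \<le> snd t" using strip_props(2)[OF ip] t by (simp add: sites_iff)
  then show "Hset ws t = insert t (Hset ws (hctl t))" using h(3,4)
    by (cases t) (auto simp: Hset_def hctl_def)
  show "t \<notin> Hset ws (hctl t)" using h(4) by (cases t) (auto simp: Hset_def hctl_def)
qed

lemma card_cong_S: "(\<forall>q\<in>S. P q \<longleftrightarrow> Q q) \<Longrightarrow> card {q \<in> S. P q} = card {q \<in> S. Q q}"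
  by (rule arg_cong[where f=card]) auto

lemma odd_single: "odd (card ({t} \<inter> y)) \<longleftrightarrow> t \<in> y"
  by (cases "t \<in> y") auto

lemma sim_H:
  assumes ip: "interval_partition L ws"
  shows "k < L \<Longrightarrow> sim L (concat (map (Hk L ws) [1..<Suc k])) (\<lambda>t. {t}) (HF ws k) (nHk L ws k)"
proof (induction k)
  case 0
  have "sim L [] (\<lambda>t. {t}) (\<lambda>t. {t}) (\<lambda>_. 0)" by (rule sim_Nil)
  moreover have "\<forall>q\<in>sites L. {q} = HF ws 0 q" using Hset_single[OF ip] by (auto simp: HF_def)
  moreover have "nHk L ws 0 y = 0" for y unfolding nHk_def by simp
  ultimately have "sim L [] (\<lambda>t. {t}) (HF ws 0) (nHk L ws 0)"
    using sim_cong_out sim_cong_n by metis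
  then show ?case by simp
next
  case (Suc k)
  let ?Tz = "\<lambda>t. off ws (snd t) = Suc k \<and> odd (fst t)" and ?T = "\<lambda>t. off ws (snd t) = Suc k"
  have IH: "sim L (concat (map (Hk L ws) [1..<Suc k])) (\<lambda>t. {t}) (HF ws k) (nHk L ws k)"
    using Suc by simp
  have s2: "sim L [czl L ?Tz (\<lambda>t. t) hctl] (HF ws k) (HF ws k)
     (\<lambda>y. card {q \<in> sites L. ?Tz q \<and> odd (card (HF ws k q \<inter> y)) \<and> odd (card (HF ws k (hctl q) \<inter> y))})"
    by (rule sim_czl) (use hctl_props[OF ip] in auto)
  have s3: "sim L [cxl L ?T hctl] (HF ws k) (upd ?T hctl (HF ws k)) (\<lambda>_. 0)"
    by (rule sim_cxl) (use hctl_props[OF ip] in auto)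
  have e: "concat (map (Hk L ws) [1..<Suc (Suc k)]) = concat (map (Hk L ws) [1..<Suc k]) @
      [czl L ?Tz (\<lambda>t. t) hctl] @ [cxl L ?T hctl]"
    by (simp add: Hk_def)
  have s: "sim L (concat (map (Hk L ws) [1..<Suc (Suc k)])) (\<lambda>t. {t}) (upd ?T hctl (HF ws k))
     (\<lambda>y. nHk L ws k y + (card {q \<in> sites L. ?Tz q \<and> odd (card (HF ws k q \<inter> y)) \<and> odd (card (HF ws k (hctl q) \<inter> y))} + 0))"
    unfolding e by (rule sim_append[OF IH sim_append[OF s2 s3]])
  have u: "\<forall>q\<in>sites L. upd ?T hctl (HF ws k) q = HF ws (Suc k) q"
  proof
    fix q assume q: "q \<in> sites L"
    show "upd ?T hctl (HF ws k) q = HF ws (Suc k) q"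
    proof (cases "off ws (snd q) = Suc k")
      case True
      note h = hctl_props[OF ip q, unfolded True]
      have "HF ws k (hctl q) = Hset ws (hctl q)" using h by (simp add: HF_def)
      moreover have "HF ws k q = {q}" using True by (simp add: HF_def)
      moreover note Hset_step[OF ip q, unfolded True]
      ultimately show ?thesis using True by (auto simp: upd_def HF_def sd_def)
    next
      case False
      then show ?thesis by (auto simp: upd_def HF_def)
    qed
  qed
  have n: "nHk L ws k y + (card {q \<in> sites L. ?Tz q \<and> odd (card (HF ws k q \<inter> y)) \<and> odd (card (HF ws k (hctl q) \<inter> y))} + 0)
      = nHk L ws (Suc k) y" for y
  proof -
    have c1: "card {q \<in> sites L. ?Tz q \<and> odd (card (HF ws k q \<inter> y)) \<and> odd (card (HF ws k (hctl q) \<inter> y))}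
       = card {t \<in> sites L. off ws (snd t) = Suc k \<and> odd (fst t) \<and> t \<in> y \<and> odd (card (Hset ws (hctl t) \<inter> y))}"
    proof (rule card_cong_S, intro ballI)
      fix q assume q: "q \<in> sites L"
      show "(?Tz q \<and> odd (card (HF ws k q \<inter> y)) \<and> odd (card (HF ws k (hctl q) \<inter> y))) \<longleftrightarrow>
            (off ws (snd q) = Suc k \<and> odd (fst q) \<and> q \<in> y \<and> odd (card (Hset ws (hctl q) \<inter> y)))"
      proof (cases "off ws (snd q) = Suc k")
        case True
        note h = hctl_props[OF ip q, unfolded True]
        have "HF ws k (hctl q) = Hset ws (hctl q)" using h by (simp add: HF_def)
        moreover have "HF ws k q = {q}" using True by (simp add: HF_def)
        ultimately show ?thesis by (cases "q \<in> y") auto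
      qed simp
    qed
    have "{t \<in> sites L. 1 \<le> off ws (snd t) \<and> off ws (snd t) \<le> Suc k \<and> odd (fst t) \<and> t \<in> y \<and> odd (card (Hset ws (hctl t) \<inter> y))}
       = {t \<in> sites L. 1 \<le> off ws (snd t) \<and> off ws (snd t) \<le> k \<and> odd (fst t) \<and> t \<in> y \<and> odd (card (Hset ws (hctl t) \<inter> y))}
       \<union> {t \<in> sites L. off ws (snd t) = Suc k \<and> odd (fst t) \<and> t \<in> y \<and> odd (card (Hset ws (hctl t) \<inter> y))}"
      by auto
    then have "nHk L ws (Suc k) y = nHk L ws k y +
        card {t \<in> sites L. off ws (snd t) = Suc k \<and> odd (fst t) \<and> t \<in> y \<and> odd (card (Hset ws (hctl t) \<inter> y))}"
      unfolding nHk_def by (subst card_Un_disjoint[symmetric]) auto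
    then show ?thesis using c1 by simp
  qed
  have "sim L (concat (map (Hk L ws) [1..<Suc (Suc k)])) (\<lambda>t. {t}) (HF ws (Suc k))
     (\<lambda>y. nHk L ws k y + (card {q \<in> sites L. ?Tz q \<and> odd (card (HF ws k q \<inter> y)) \<and> odd (card (HF ws k (hctl q) \<inter> y))} + 0))"
    by (rule sim_cong_out[OF s u])
  then show ?case by (rule sim_cong_n) (use n in simp)
qed

lemma sd_HP: "fst t < L \<Longrightarrow> sd (Hset ws t) (Pset L ws (Suc (fst t), snd t)) = Pset L ws t"
  by (auto simp: sd_def Hset_def Pset_def)

lemma sd_PP: "fst t < L \<Longrightarrow> sd (Pset L ws t) (Pset L ws (Suc (fst t), snd t)) = Hset ws t"
  by (auto simp: sd_def Hset_def Pset_def)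

lemma sim_V:
  shows "d \<le> L - 1 \<Longrightarrow> sim L (map (Vl L) (rev [L - 1 - d..<L - 1])) (VF L ws (L - 1)) (VF L ws (L - 1 - d)) (\<lambda>_. 0)"
proof (induction d)
  case 0
  then show ?case using sim_Nil by simp
next
  case (Suc d)
  define j where "j = L - 1 - Suc d"
  have jd: "Suc j = L - 1 - d" "Suc j < L" using Suc unfolding j_def by auto
  have e: "rev [j..<L - 1] = rev [Suc j..<L - 1] @ [j]" using jd by (simp add: upt_conv_Cons)
  have IH: "sim L (map (Vl L) (rev [Suc j..<L - 1])) (VF L ws (L - 1)) (VF L ws (Suc j)) (\<lambda>_. 0)"
    using Suc jd by simp
  have s2: "sim L [Vl L j] (VF L ws (Suc j)) (upd (\<lambda>t. fst t = j) (\<lambda>t. (Suc (fst t), snd t)) (VF L ws (Suc j))) (\<lambda>_. 0)"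
    unfolding Vl_def by (rule sim_cxl) (use jd in \<open>auto simp: sites_iff\<close>)
  have u: "\<forall>q\<in>sites L. upd (\<lambda>t. fst t = j) (\<lambda>t. (Suc (fst t), snd t)) (VF L ws (Suc j)) q = VF L ws j q"
  proof
    fix q assume q: "q \<in> sites L"
    show "upd (\<lambda>t. fst t = j) (\<lambda>t. (Suc (fst t), snd t)) (VF L ws (Suc j)) q = VF L ws j q"
    proof (cases "fst q = j")
      case True
      then show ?thesis using sd_HP[of q L ws] q by (simp add: upd_def VF_def sites_iff)
    next
      case False
      then show ?thesis by (auto simp: upd_def VF_def)
    qed
  qed
  have "sim L (map (Vl L) (rev [Suc j..<L - 1]) @ [Vl L j]) (VF L ws (L - 1)) (VF L ws j) (\<lambda>y. 0 + 0)"
    by (rule sim_cong_out[OF sim_append[OF IH s2] u])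
  then show ?case using e unfolding j_def by simp
qed

lemma sim_Vinv:
  shows "j \<le> L - 1 \<Longrightarrow> sim L (map (Vl L) [0..<j]) (VF L ws 0) (VF L ws j) (\<lambda>_. 0)"
proof (induction j)
  case 0
  then show ?case using sim_Nil by simp
next
  case (Suc j)
  have jd: "Suc j < L" using Suc by auto
  have IH: "sim L (map (Vl L) [0..<j]) (VF L ws 0) (VF L ws j) (\<lambda>_. 0)" using Suc by simp
  have s2: "sim L [Vl L j] (VF L ws j) (upd (\<lambda>t. fst t = j) (\<lambda>t. (Suc (fst t), snd t)) (VF L ws j)) (\<lambda>_. 0)"
    unfolding Vl_def by (rule sim_cxl) (use jd in \<open>auto simp: sites_iff\<close>)
  have u: "\<forall>q\<in>sites L. upd (\<lambda>t. fst t = j) (\<lambda>t. (Suc (fst t), snd t)) (VF L ws j) q = VF L ws (Suc j) q"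
  proof
    fix q assume q: "q \<in> sites L"
    show "upd (\<lambda>t. fst t = j) (\<lambda>t. (Suc (fst t), snd t)) (VF L ws j) q = VF L ws (Suc j) q"
    proof (cases "fst q = j")
      case True
      then show ?thesis using sd_PP[of q L ws] q by (simp add: upd_def VF_def sites_iff)
    next
      case False
      then show ?thesis by (auto simp: upd_def VF_def)
    qed
  qed
  have "sim L (map (Vl L) [0..<j] @ [Vl L j]) (VF L ws 0) (VF L ws (Suc j)) (\<lambda>y. 0 + 0)"
    by (rule sim_cong_out[OF sim_append[OF IH s2] u])
  then show ?case by simp
qed

lemma sim_Hinv:
  assumes ip: "interval_partition L ws"
  shows "d \<le> L - 1 \<Longrightarrow> sim L (map (\<lambda>k. cxl L (\<lambda>t. off ws (snd t) = k) hctl) (rev [L - d..<L]))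
            (HF ws (L - 1)) (HF ws (L - 1 - d)) (\<lambda>_. 0)"
proof (induction d)
  case 0
  then show ?case using sim_Nil by simp
next
  case (Suc d)
  define k where "k = L - 1 - Suc d"
  have kd: "Suc k = L - 1 - d" "Suc k < L" "L - Suc d = Suc k" using Suc unfolding k_def by auto
  let ?f = "\<lambda>k. cxl L (\<lambda>t. off ws (snd t) = k) hctl"
  have e: "rev [Suc k..<L] = rev [Suc (Suc k)..<L] @ [Suc k]" using kd by (simp add: upt_conv_Cons)
  have IH: "sim L (map ?f (rev [Suc (Suc k)..<L])) (HF ws (L - 1)) (HF ws (Suc k)) (\<lambda>_. 0)"
  proof -
    have "d \<le> L - 1" using Suc by simp
    then have "sim L (map ?f (rev [L - d..<L])) (HF ws (L - 1)) (HF ws (L - 1 - d)) (\<lambda>_. 0)" by (rule Suc.IH)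
    moreover have "L - d = Suc (Suc k)" "L - 1 - d = Suc k" using kd by auto
    ultimately show ?thesis by simp
  qed
  have s2: "sim L [?f (Suc k)] (HF ws (Suc k)) (upd (\<lambda>t. off ws (snd t) = Suc k) hctl (HF ws (Suc k))) (\<lambda>_. 0)"
    by (rule sim_cxl) (use hctl_props[OF ip] in auto)
  have u: "\<forall>q\<in>sites L. upd (\<lambda>t. off ws (snd t) = Suc k) hctl (HF ws (Suc k)) q = HF ws k q"
  proof
    fix q assume q: "q \<in> sites L"
    show "upd (\<lambda>t. off ws (snd t) = Suc k) hctl (HF ws (Suc k)) q = HF ws k q"
    proof (cases "off ws (snd q) = Suc k")
      case True
      note h = hctl_props[OF ip q, unfolded True]
      have "HF ws (Suc k) (hctl q) = Hset ws (hctl q)" using h by (simp add: HF_def)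
      moreover have "HF ws (Suc k) q = Hset ws q" using True by (simp add: HF_def)
      moreover note Hset_step[OF ip q, unfolded True]
      ultimately show ?thesis using True by (auto simp: upd_def HF_def sd_def)
    next
      case False
      then show ?thesis by (auto simp: upd_def HF_def)
    qed
  qed
  have "sim L (map ?f (rev [Suc (Suc k)..<L]) @ [?f (Suc k)]) (HF ws (L - 1)) (HF ws k) (\<lambda>y. 0 + 0)"
    by (rule sim_cong_out[OF sim_append[OF IH s2] u])
  then show ?case using e kd unfolding k_def by simp
qed



lemma sim_gadget:
  assumes g1: "\<forall>t. T1 t \<longrightarrow> \<not> T1 (c1 t)" and g2: "\<forall>t. T2 t \<longrightarrow> \<not> T2 (c2 t)" and g3: "\<forall>t. T3 t \<longrightarrow> \<not> T3 (c3 t)"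
    and s1: "\<forall>t\<in>sites L. T1 t \<longrightarrow> c1 t \<in> sites L" and s2: "\<forall>t\<in>sites L. T2 t \<longrightarrow> c2 t \<in> sites L"
    and s3: "\<forall>t\<in>sites L. T3 t \<longrightarrow> c3 t \<in> sites L"
    and sz: "\<forall>q\<in>sites L. Tz q \<longrightarrow> u q \<in> sites L \<and> v q \<in> sites L"
  shows "sim L [cxl L T1 c1, cxl L T2 c2, cxl L T3 c3, czl L Tz u v, cxl L T3 c3, cxl L T2 c2, cxl L T1 c1] F F
    (\<lambda>y. card {q \<in> sites L. Tz q \<and> odd (card (upd T3 c3 (upd T2 c2 (upd T1 c1 F)) (u q) \<inter> y))
                 \<and> odd (card (upd T3 c3 (upd T2 c2 (upd T1 c1 F)) (v q) \<inter> y))})"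
proof -
  define F1 where "F1 = upd T1 c1 F"
  define F2 where "F2 = upd T2 c2 F1"
  define F3 where "F3 = upd T3 c3 F2"
  have a1: "sim L [cxl L T1 c1] F F1 (\<lambda>_. 0)" unfolding F1_def by (rule sim_cxl) (use g1 s1 in auto)
  have a2: "sim L [cxl L T2 c2] F1 F2 (\<lambda>_. 0)" unfolding F2_def by (rule sim_cxl) (use g2 s2 in auto)
  have a3: "sim L [cxl L T3 c3] F2 F3 (\<lambda>_. 0)" unfolding F3_def by (rule sim_cxl) (use g3 s3 in auto)
  have az: "sim L [czl L Tz u v] F3 F3
     (\<lambda>y. card {q \<in> sites L. Tz q \<and> odd (card (F3 (u q) \<inter> y)) \<and> odd (card (F3 (v q) \<inter> y))})"
    by (rule sim_czl) (use sz in auto)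
  have b3: "sim L [cxl L T3 c3] F3 F2 (\<lambda>_. 0)"
  proof -
    have "sim L [cxl L T3 c3] F3 (upd T3 c3 F3) (\<lambda>_. 0)" by (rule sim_cxl) (use g3 s3 in auto)
    moreover have "upd T3 c3 F3 = F2" unfolding F3_def by (rule upd_upd[OF g3])
    ultimately show ?thesis by simp
  qed
  have b2: "sim L [cxl L T2 c2] F2 F1 (\<lambda>_. 0)"
  proof -
    have "sim L [cxl L T2 c2] F2 (upd T2 c2 F2) (\<lambda>_. 0)" by (rule sim_cxl) (use g2 s2 in auto)
    moreover have "upd T2 c2 F2 = F1" unfolding F2_def by (rule upd_upd[OF g2])
    ultimately show ?thesis by simp
  qed
  have b1: "sim L [cxl L T1 c1] F1 F (\<lambda>_. 0)"
  proof -
    have "sim L [cxl L T1 c1] F1 (upd T1 c1 F1) (\<lambda>_. 0)" by (rule sim_cxl) (use g1 s1 in auto)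
    moreover have "upd T1 c1 F1 = F" unfolding F1_def by (rule upd_upd[OF g1])
    ultimately show ?thesis by simp
  qed
  have all: "sim L ([cxl L T1 c1] @ [cxl L T2 c2] @ [cxl L T3 c3] @ [czl L Tz u v] @ [cxl L T3 c3] @ [cxl L T2 c2] @ [cxl L T1 c1]) F F
     (\<lambda>y. 0 + (0 + (0 + (card {q \<in> sites L. Tz q \<and> odd (card (F3 (u q) \<inter> y)) \<and> odd (card (F3 (v q) \<inter> y))} + (0 + (0 + 0))))))"
    by (rule sim_append[OF a1 sim_append[OF a2 sim_append[OF a3 sim_append[OF az sim_append[OF b3 sim_append[OF b2 b1]]]]]])
  show ?thesis using all unfolding F3_def F2_def F1_def by simp
qed

definition TA :: "nat \<Rightarrow> nat list \<Rightarrow> nat \<Rightarrow> nat \<Rightarrow> site \<Rightarrow> bool" where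
  "TA L ws i j t \<longleftrightarrow> fst t mod 2 = i \<and> snd t mod 2 = j \<and> Suc (fst t) < L \<and> 1 \<le> off ws (snd t)"

definition TN :: "nat \<Rightarrow> nat list \<Rightarrow> nat \<Rightarrow> nat \<Rightarrow> site \<Rightarrow> bool" where
  "TN L ws i j t \<longleftrightarrow> 1 \<le> fst t \<and> TA L ws i j (fst t - 1, snd t)"

definition vctl :: "site \<Rightarrow> site" where "vctl t = (fst t - 1, snd t)"
definition nN :: "site \<Rightarrow> site" where "nN t = (Suc (fst t), snd t)"
definition nB :: "site \<Rightarrow> site" where "nB t = (Suc (fst t), snd t - 1)"

definition gadget :: "nat \<Rightarrow> nat list \<Rightarrow> nat \<Rightarrow> nat \<Rightarrow> layer list" where
  "gadget L ws i j = [cxl L (TA L ws i j) hctl, cxl L (TN L ws i j) vctl, cxl L (TN L ws i j) hctl,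
      czl L (TA L ws i j) nN nB, cxl L (TN L ws i j) hctl, cxl L (TN L ws i j) vctl, cxl L (TA L ws i j) hctl]"

lemma TA_c: "TA L ws i j t \<Longrightarrow> 1 \<le> snd t"
  using off_le[of ws "snd t"] by (auto simp: TA_def)

lemma mod2_pred: "1 \<le> (c::nat) \<Longrightarrow> (c - 1) mod 2 \<noteq> c mod 2"
  by (cases c) (auto, presburger)

lemma Pset_id:
  assumes ip: "interval_partition L ws" and q: "q \<in> sites L" and r: "Suc (fst q) < L" and o: "1 \<le> off ws (snd q)"
  shows "sd (sd (Pset L ws (nN q)) (sd (Pset L ws q) (Pset L ws (hctl q)))) (Pset L ws (nB q)) = {q}"
    "Pset L ws (nB q) = Qs L ws q"
proof -
  note h = hctl_props[OF ip q o]
  have sb: "sa ws (snd q - 1) = sa ws (snd q)" using h(3) by (simp add: hctl_def)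
  have a: "sa ws (snd q) \<le> snd q" using strip_props(2)[OF ip] q by (simp add: sites_iff)
  obtain r c where qe: "q = (r, c)" by (cases q)
  show "sd (sd (Pset L ws (nN q)) (sd (Pset L ws q) (Pset L ws (hctl q)))) (Pset L ws (nB q)) = {q}"
    using sb a r h(4) qe by (auto simp: sd_def Pset_def nN_def nB_def hctl_def)
  show "Pset L ws (nB q) = Qs L ws q"
    using sb h(4) by (auto simp: Pset_def Qs_def nB_def)
qed

lemma sim_gadget_P:
  assumes ip: "interval_partition L ws" and ij: "i < 2" "j < 2"
  shows "sim L (gadget L ws i j) (Pset L ws) (Pset L ws)
    (\<lambda>y. card {q \<in> sites L. TA L ws i j q \<and> q \<in> y \<and> odd (card (Qs L ws q \<inter> y))})"
proof -
  let ?TA = "TA L ws i j" and ?TN = "TN L ws i j"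
  have g1: "\<forall>t. ?TA t \<longrightarrow> \<not> ?TA (hctl t)"
    using TA_c mod2_pred by (auto simp: TA_def hctl_def)
  have g2: "\<forall>t. ?TN t \<longrightarrow> \<not> ?TN (vctl t)"
  proof (intro allI impI)
    fix t assume "?TN t"
    then have "1 \<le> fst t" "(fst t - 1) mod 2 = i" by (auto simp: TN_def TA_def)
    then show "\<not> ?TN (vctl t)" using mod2_pred[of "fst t - 1"] by (auto simp: TN_def TA_def vctl_def)
  qed
  have g3: "\<forall>t. ?TN t \<longrightarrow> \<not> ?TN (hctl t)"
  proof (intro allI impI)
    fix t assume "?TN t"
    then have "1 \<le> snd t" "snd t mod 2 = j" using off_le[of ws "snd t"] by (auto simp: TN_def TA_def)
    then show "\<not> ?TN (hctl t)" using mod2_pred[of "snd t"] by (auto simp: TN_def TA_def hctl_def)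
  qed
  have s1: "\<forall>t\<in>sites L. ?TA t \<longrightarrow> hctl t \<in> sites L" using hctl_props(1)[OF ip] by (auto simp: TA_def)
  have s2: "\<forall>t\<in>sites L. ?TN t \<longrightarrow> vctl t \<in> sites L" by (auto simp: TN_def vctl_def sites_iff)
  have s3: "\<forall>t\<in>sites L. ?TN t \<longrightarrow> hctl t \<in> sites L"
    using TA_c by (auto simp: TN_def hctl_def sites_iff)
  have sz: "\<forall>q\<in>sites L. ?TA q \<longrightarrow> nN q \<in> sites L \<and> nB q \<in> sites L"
    using TA_c by (auto simp: TA_def nN_def nB_def sites_iff)
  note G = sim_gadget[OF g1 g2 g3 s1 s2 s3 sz, of "Pset L ws"]
  let ?F3 = "upd ?TN hctl (upd ?TN vctl (upd ?TA hctl (Pset L ws)))"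
  have ev: "odd (card (?F3 (nN q) \<inter> y)) \<and> odd (card (?F3 (nB q) \<inter> y)) \<longleftrightarrow> q \<in> y \<and> odd (card (Qs L ws q \<inter> y))"
    if q: "q \<in> sites L" and tq: "?TA q" for q y
  proof -
    have r: "Suc (fst q) < L" and o: "1 \<le> off ws (snd q)" and pi: "fst q mod 2 = i" and pj: "snd q mod 2 = j"
      using tq by (auto simp: TA_def)
    have c1: "1 \<le> snd q" using TA_c[OF tq] .
    have nNa: "\<not> ?TA (nN q)" using pi mod2_pred[of "Suc (fst q)"] by (auto simp: TA_def nN_def)
    have nNn: "?TN (nN q)" using tq by (simp add: TN_def nN_def)
    have nBa: "\<not> ?TA (nB q)" using pi mod2_pred[of "Suc (fst q)"] by (auto simp: TA_def nB_def)
    have nBn: "\<not> ?TN (nB q)" using pj c1 mod2_pred[of "snd q"] by (auto simp: TN_def TA_def nB_def)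
    have vN: "vctl (nN q) = q" by (simp add: vctl_def nN_def)
    have hN: "hctl (nN q) = nB q" by (simp add: hctl_def nN_def nB_def)
    have F3N: "?F3 (nN q) = sd (sd (Pset L ws (nN q)) (sd (Pset L ws q) (Pset L ws (hctl q)))) (Pset L ws (nB q))"
      using nNa nNn nBa nBn tq vN hN by (simp add: upd_def)
    have F3B: "?F3 (nB q) = Pset L ws (nB q)"
      using nBa nBn by (simp add: upd_def)
    show ?thesis using Pset_id[OF ip q r o] F3N F3B by (cases "q \<in> y") auto
  qed
  show ?thesis unfolding gadget_def
    by (rule sim_cong_n[OF G]) (use ev in \<open>auto intro!: card_cong_S\<close>)
qed



definition Pstage :: "nat \<Rightarrow> nat list \<Rightarrow> layer list" where
  "Pstage L ws = gadget L ws 0 0 @ gadget L ws 0 1 @ gadget L ws 1 0 @ gadget L ws 1 1"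

definition Cws :: "nat \<Rightarrow> nat list \<Rightarrow> layer list" where
  "Cws L ws = concat (map (Hk L ws) [1..<L]) @ map (Vl L) (rev [0..<L - 1]) @ Pstage L ws
     @ map (Vl L) [0..<L - 1] @ map (\<lambda>k. cxl L (\<lambda>t. off ws (snd t) = k) hctl) (rev [1..<L])"

definition nP :: "nat \<Rightarrow> nat list \<Rightarrow> site set \<Rightarrow> nat" where
  "nP L ws y = card {q \<in> sites L. q \<in> y \<and> odd (card (Qs L ws q \<inter> y))}"

definition nR :: "nat \<Rightarrow> nat list \<Rightarrow> site set \<Rightarrow> nat" where
  "nR L ws y = card {q \<in> sites L. q \<in> y \<and> odd (card (Rs ws q \<inter> y))}"

lemma card_split: "finite S \<Longrightarrow> card {q \<in> S. P q} = card {q \<in> S. P q \<and> Q q} + card {q \<in> S. P q \<and> \<not> Q q}"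
proof -
  assume f: "finite S"
  have "{q \<in> S. P q} = {q \<in> S. P q \<and> Q q} \<union> {q \<in> S. P q \<and> \<not> Q q}" by auto
  then show ?thesis using f by (simp add: card_Un_disjoint[symmetric] disjoint_iff)
qed

lemma sim_P:
  assumes ip: "interval_partition L ws"
  shows "sim L (Pstage L ws) (Pset L ws) (Pset L ws) (nP L ws)"
proof -
  let ?c = "\<lambda>i j y. card {q \<in> sites L. TA L ws i j q \<and> q \<in> y \<and> odd (card (Qs L ws q \<inter> y))}"
  have s: "sim L (Pstage L ws) (Pset L ws) (Pset L ws) (\<lambda>y. ?c 0 0 y + (?c 0 1 y + (?c 1 0 y + ?c 1 1 y)))"
    unfolding Pstage_def
    by (rule sim_append[OF sim_gadget_P[OF ip, of 0 0] sim_append[OF sim_gadget_P[OF ip, of 0 1]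
          sim_append[OF sim_gadget_P[OF ip, of 1 0] sim_gadget_P[OF ip, of 1 1]]]]) auto
  have n: "?c 0 0 y + (?c 0 1 y + (?c 1 0 y + ?c 1 1 y)) = nP L ws y" for y
  proof -
    let ?B = "\<lambda>q. Suc (fst q) < L \<and> 1 \<le> off ws (snd q) \<and> q \<in> y \<and> odd (card (Qs L ws q \<inter> y))"
    have e0: "nP L ws y = card {q \<in> sites L. ?B q}"
      unfolding nP_def
    proof (rule card_cong_S, intro ballI)
      fix q assume q: "q \<in> sites L"
      show "(q \<in> y \<and> odd (card (Qs L ws q \<inter> y))) \<longleftrightarrow> ?B q"
      proof (cases "Suc (fst q) < L \<and> 1 \<le> off ws (snd q)")
        case True then show ?thesis by simp
      next
        case False
        then have "Qs L ws q = {}" by (auto simp: Qs_def off_def)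
        then show ?thesis using False by simp
      qed
    qed
    have sp: "card {q \<in> sites L. ?B q} = card {q \<in> sites L. ?B q \<and> fst q mod 2 = 0} + card {q \<in> sites L. ?B q \<and> \<not> fst q mod 2 = 0}"
      by (rule card_split) simp
    have sp0: "card {q \<in> sites L. ?B q \<and> fst q mod 2 = 0} = card {q \<in> sites L. (?B q \<and> fst q mod 2 = 0) \<and> snd q mod 2 = 0}
       + card {q \<in> sites L. (?B q \<and> fst q mod 2 = 0) \<and> \<not> snd q mod 2 = 0}"
      by (rule card_split) simp
    have sp1: "card {q \<in> sites L. ?B q \<and> \<not> fst q mod 2 = 0} = card {q \<in> sites L. (?B q \<and> \<not> fst q mod 2 = 0) \<and> snd q mod 2 = 0}
       + card {q \<in> sites L. (?B q \<and> \<not> fst q mod 2 = 0) \<and> \<not> snd q mod 2 = 0}"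
      by (rule card_split) simp
    have x00: "?c 0 0 y = card {q \<in> sites L. (?B q \<and> fst q mod 2 = 0) \<and> snd q mod 2 = 0}"
      by (rule card_cong_S) (auto simp: TA_def)
    have x01: "?c 0 1 y = card {q \<in> sites L. (?B q \<and> fst q mod 2 = 0) \<and> \<not> snd q mod 2 = 0}"
      by (rule card_cong_S) (auto simp: TA_def)
    have x10: "?c 1 0 y = card {q \<in> sites L. (?B q \<and> \<not> fst q mod 2 = 0) \<and> snd q mod 2 = 0}"
      by (rule card_cong_S) (auto simp: TA_def)
    have x11: "?c 1 1 y = card {q \<in> sites L. (?B q \<and> \<not> fst q mod 2 = 0) \<and> \<not> snd q mod 2 = 0}"
      by (rule card_cong_S) (auto simp: TA_def)
    show ?thesis using e0 sp sp0 sp1 x00 x01 x10 x11 by linarith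
  qed
  show ?thesis by (rule sim_cong_n[OF s]) (use n in simp)
qed

lemma nH_final:
  assumes ip: "interval_partition L ws" and L: "1 \<le> L"
  shows "nHk L ws (L - 1) y = nR L ws y"
  unfolding nHk_def nR_def
proof (rule card_cong_S, intro ballI)
  fix t assume t: "t \<in> sites L"
  have "snd t < L" using t by (simp add: sites_iff)
  then have ol: "off ws (snd t) \<le> L - 1" using off_le[of ws "snd t"] by arith
  show "(1 \<le> off ws (snd t) \<and> off ws (snd t) \<le> L - 1 \<and> odd (fst t) \<and> t \<in> y \<and> odd (card (Hset ws (hctl t) \<inter> y)))
     \<longleftrightarrow> (t \<in> y \<and> odd (card (Rs ws t \<inter> y)))"
  proof (cases "1 \<le> off ws (snd t) \<and> odd (fst t)")
    case True
    note h = hctl_props[OF ip t]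
    have "Hset ws (hctl t) = Rs ws t" using True h(3,4)
      by (auto simp: Hset_def Rs_def hctl_def)
    then show ?thesis using True ol by simp
  next
    case False
    then have "Rs ws t = {}" by (auto simp: Rs_def off_def)
    then show ?thesis using False by auto
  qed
qed

lemma sim_C:
  assumes ip: "interval_partition L ws" and L: "1 \<le> L"
  shows "sim L (Cws L ws) (\<lambda>t. {t}) (\<lambda>t. {t}) (\<lambda>y. nR L ws y + nP L ws y)"
proof -
  have a1: "sim L (concat (map (Hk L ws) [1..<L])) (\<lambda>t. {t}) (HF ws (L - 1)) (nR L ws)"
  proof -
    have eqL: "Suc (L - 1) = L" using L by simp
    have "sim L (concat (map (Hk L ws) [1..<L])) (\<lambda>t. {t}) (HF ws (L - 1)) (nHk L ws (L - 1))"
      using sim_H[OF ip, of "L - 1", unfolded eqL] L by simp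
    moreover have "nHk L ws (L - 1) = nR L ws" by (rule ext) (rule nH_final[OF ip L])
    ultimately show ?thesis by simp
  qed
  have hv: "\<forall>q\<in>sites L. HF ws (L - 1) q = VF L ws (L - 1) q"
  proof
    fix q assume q: "q \<in> sites L"
    have "snd q < L" using q by (simp add: sites_iff)
    then have "off ws (snd q) \<le> L - 1" using off_le[of ws "snd q"] by arith
    moreover have "L - 1 \<le> fst q \<Longrightarrow> Pset L ws q = Hset ws q" using q by (auto simp: Pset_def Hset_def sites_iff)
    ultimately show "HF ws (L - 1) q = VF L ws (L - 1) q" by (simp add: HF_def VF_def)
  qed
  have vh: "\<forall>q\<in>sites L. VF L ws (L - 1) q = HF ws (L - 1) q" using hv by simp
  have v0: "\<forall>q\<in>sites L. VF L ws 0 q = Pset L ws q" by (simp add: VF_def)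
  have p0: "\<forall>q\<in>sites L. Pset L ws q = VF L ws 0 q" by (simp add: VF_def)
  have a2: "sim L (map (Vl L) (rev [0..<L - 1])) (HF ws (L - 1)) (Pset L ws) (\<lambda>_. 0)"
  proof -
    have "sim L (map (Vl L) (rev [L - 1 - (L - 1)..<L - 1])) (VF L ws (L - 1)) (VF L ws (L - 1 - (L - 1))) (\<lambda>_. 0)"
      by (rule sim_V) simp
    then have "sim L (map (Vl L) (rev [0..<L - 1])) (VF L ws (L - 1)) (VF L ws 0) (\<lambda>_. 0)" by simp
    then show ?thesis by (rule sim_cong_out[OF sim_cong_in[OF _ vh] v0])
  qed
  have a3: "sim L (Pstage L ws) (Pset L ws) (Pset L ws) (nP L ws)" by (rule sim_P[OF ip])
  have a4: "sim L (map (Vl L) [0..<L - 1]) (Pset L ws) (HF ws (L - 1)) (\<lambda>_. 0)"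
  proof -
    have "sim L (map (Vl L) [0..<L - 1]) (VF L ws 0) (VF L ws (L - 1)) (\<lambda>_. 0)" by (rule sim_Vinv) simp
    then show ?thesis by (rule sim_cong_out[OF sim_cong_in[OF _ v0] vh])
  qed
  have a5: "sim L (map (\<lambda>k. cxl L (\<lambda>t. off ws (snd t) = k) hctl) (rev [1..<L])) (HF ws (L - 1)) (\<lambda>t. {t}) (\<lambda>_. 0)"
  proof -
    have "sim L (map (\<lambda>k. cxl L (\<lambda>t. off ws (snd t) = k) hctl) (rev [L - (L - 1)..<L])) (HF ws (L - 1)) (HF ws (L - 1 - (L - 1))) (\<lambda>_. 0)"
      by (rule sim_Hinv[OF ip]) simp
    moreover have "L - (L - 1) = 1" "L - 1 - (L - 1) = 0" using L by auto
    ultimately have "sim L (map (\<lambda>k. cxl L (\<lambda>t. off ws (snd t) = k) hctl) (rev [1..<L])) (HF ws (L - 1)) (HF ws 0) (\<lambda>_. 0)"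
      by simp
    moreover have "\<forall>q\<in>sites L. HF ws 0 q = {q}" using Hset_single[OF ip] by (auto simp: HF_def)
    ultimately show ?thesis by (rule sim_cong_out)
  qed
  have "sim L (Cws L ws) (\<lambda>t. {t}) (\<lambda>t. {t}) (\<lambda>y. nR L ws y + (0 + (nP L ws y + (0 + 0))))"
    unfolding Cws_def by (rule sim_append[OF a1 sim_append[OF a2 sim_append[OF a3 sim_append[OF a4 a5]]]])
  then show ?thesis by (rule sim_cong_n) simp
qed

lemma sum_parity: "finite S \<Longrightarrow> even ((\<Sum>q\<in>S. f q) + card {q \<in> S. odd (f q :: nat)})"
proof (induction S rule: finite_induct)
  case empty then show ?case by simp
next
  case (insert a S)
  have "{q \<in> insert a S. odd (f q)} = (if odd (f a) then insert a {q \<in> S. odd (f q)} else {q \<in> S. odd (f q)})" by auto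
  then show ?case using insert by auto
qed

lemma NE_sum:
  assumes fy: "finite y"
  shows "NE E y = (\<Sum>q\<in>y. card {p \<in> y. E p q})"
proof -
  have e: "{pq. fst pq \<in> y \<and> snd pq \<in> y \<and> E (fst pq) (snd pq)} = (\<lambda>(q, p). (p, q)) ` (SIGMA q:y. {p \<in> y. E p q})"
    by (auto simp: image_iff)
  have "card ((\<lambda>(q, p). (p, q)) ` (SIGMA q:y. {p \<in> y. E p q})) = card (SIGMA q:y. {p \<in> y. E p q})"
    by (rule card_image) (auto simp: inj_on_def)
  also have "\<dots> = (\<Sum>q\<in>y. card {p \<in> y. E p q})" using fy by (intro card_SigmaI) auto
  finally show ?thesis unfolding NE_def e .
qed

lemma parity_C:
  assumes ip: "interval_partition L ws" and y: "y \<subseteq> sites L"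
  shows "even (nR L ws y + nP L ws y + NE (Ews ws) y)"
proof -
  have fy: "finite y" using y finite_sub_sites by blast
  have c: "card {p \<in> y. Ews ws p q} = card (Rs ws q \<inter> y) + card (Qs L ws q \<inter> y)" if q: "q \<in> y" for q
  proof -
    have "{p \<in> y. Ews ws p q} = (Rs ws q \<inter> y) \<union> (Qs L ws q \<inter> y)"
      using Ews_iff[OF ip] y q by blast
    moreover have "(Rs ws q \<inter> y) \<inter> (Qs L ws q \<inter> y) = {}" by (auto simp: Rs_def Qs_def)
    ultimately show ?thesis using fy by (simp add: card_Un_disjoint)
  qed
  have ne: "NE (Ews ws) y = (\<Sum>q\<in>y. card (Rs ws q \<inter> y)) + (\<Sum>q\<in>y. card (Qs L ws q \<inter> y))"
    unfolding NE_sum[OF fy] using c by (simp add: sum.distrib)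
  have r: "nR L ws y = card {q \<in> y. odd (card (Rs ws q \<inter> y))}"
    unfolding nR_def using y by (intro arg_cong[where f=card]) auto
  have p: "nP L ws y = card {q \<in> y. odd (card (Qs L ws q \<inter> y))}"
    unfolding nP_def using y by (intro arg_cong[where f=card]) auto
  have e1: "even ((\<Sum>q\<in>y. card (Rs ws q \<inter> y)) + card {q \<in> y. odd (card (Rs ws q \<inter> y))})"
    by (rule sum_parity[OF fy])
  have e2: "even ((\<Sum>q\<in>y. card (Qs L ws q \<inter> y)) + card {q \<in> y. odd (card (Qs L ws q \<inter> y))})"
    by (rule sum_parity[OF fy])
  show ?thesis unfolding ne r p using e1 e2 by presburger
qed



lemma valid_cxl2:
  assumes a: "\<forall>t\<in>sites L. T t \<longrightarrow> ctl t \<in> sites L \<and> adjacent (ctl t) t"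
    and b: "\<forall>t\<in>sites L. \<forall>t'\<in>sites L. T t \<longrightarrow> T t' \<longrightarrow> ctl t \<noteq> t'"
    and c: "\<forall>t\<in>sites L. \<forall>t'\<in>sites L. T t \<longrightarrow> T t' \<longrightarrow> ctl t = ctl t' \<longrightarrow> t = t'"
  shows "valid_layer L (cxl L T ctl)"
proof (rule valid_cxl)
  show "\<forall>t\<in>sites L. T t \<longrightarrow> ctl t \<in> sites L \<and> adjacent (ctl t) t" using a .
  show "\<forall>t\<in>sites L. \<forall>t'\<in>sites L. T t \<longrightarrow> T t' \<longrightarrow> t \<noteq> t' \<longrightarrow> {ctl t, t} \<inter> {ctl t', t'} = {}"
  proof (intro ballI impI)
    fix t t' assume "t \<in> sites L" "t' \<in> sites L" "T t" "T t'" "t \<noteq> t'"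
    then show "{ctl t, t} \<inter> {ctl t', t'} = {}" using b c by blast
  qed
qed

lemma adj_h: "1 \<le> snd t \<Longrightarrow> adjacent (hctl t) t" by (auto simp: adjacent_def hctl_def)
lemma adj_h': "1 \<le> snd t \<Longrightarrow> adjacent t (hctl t)" by (auto simp: adjacent_def hctl_def)
lemma hctl_inj: "1 \<le> snd t \<Longrightarrow> 1 \<le> snd t' \<Longrightarrow> hctl t = hctl t' \<Longrightarrow> t = t'"
  by (cases t, cases t') (auto simp: hctl_def)

lemma valid_Hx:
  assumes ip: "interval_partition L ws" and k: "1 \<le> k"
  shows "valid_layer L (cxl L (\<lambda>t. off ws (snd t) = k) hctl)"
proof (rule valid_cxl2)
  show "\<forall>t\<in>sites L. off ws (snd t) = k \<longrightarrow> hctl t \<in> sites L \<and> adjacent (hctl t) t"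
    using hctl_props[OF ip] adj_h k by auto
  show "\<forall>t\<in>sites L. \<forall>t'\<in>sites L. off ws (snd t) = k \<longrightarrow> off ws (snd t') = k \<longrightarrow> hctl t \<noteq> t'"
    using hctl_props(2)[OF ip] k by fastforce
  show "\<forall>t\<in>sites L. \<forall>t'\<in>sites L. off ws (snd t) = k \<longrightarrow> off ws (snd t') = k \<longrightarrow> hctl t = hctl t' \<longrightarrow> t = t'"
    using hctl_props(4)[OF ip] hctl_inj k by metis
qed

lemma valid_Hz:
  assumes ip: "interval_partition L ws" and k: "1 \<le> k"
  shows "valid_layer L (czl L (\<lambda>t. off ws (snd t) = k \<and> odd (fst t)) (\<lambda>t. t) hctl)"
proof (rule valid_czl)
  show "\<forall>t\<in>sites L. off ws (snd t) = k \<and> odd (fst t) \<longrightarrow> t \<in> sites L \<and> hctl t \<in> sites L \<and> adjacent t (hctl t)"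
    using hctl_props[OF ip] adj_h' k by auto
  show "\<forall>t\<in>sites L. \<forall>t'\<in>sites L. off ws (snd t) = k \<and> odd (fst t) \<longrightarrow> off ws (snd t') = k \<and> odd (fst t') \<longrightarrow>
      t \<noteq> t' \<longrightarrow> {t, hctl t} \<inter> {t', hctl t'} = {}"
  proof (intro ballI impI)
    fix t t' assume t: "t \<in> sites L" "t' \<in> sites L" "off ws (snd t) = k \<and> odd (fst t)" "off ws (snd t') = k \<and> odd (fst t')" "t \<noteq> t'"
    have 1: "hctl t \<noteq> t'" using hctl_props(2)[OF ip t(1)] t k by auto
    have 2: "hctl t' \<noteq> t" using hctl_props(2)[OF ip t(2)] t k by auto
    have c: "1 \<le> snd t" "1 \<le> snd t'" using hctl_props(4)[OF ip t(1)] hctl_props(4)[OF ip t(2)] t k by auto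
    have 3: "hctl t \<noteq> hctl t'"
    proof
      assume "hctl t = hctl t'"
      then have "t = t'" by (rule hctl_inj[OF c])
      then show False using t(5) by simp
    qed
    show "{t, hctl t} \<inter> {t', hctl t'} = {}" using 1 2 3 t(5) by auto
  qed
qed

lemma valid_Vl:
  assumes k: "Suc k < L"
  shows "valid_layer L (Vl L k)"
  unfolding Vl_def
  by (rule valid_cxl2) (use k in \<open>auto simp: sites_iff adjacent_def prod_eq_iff\<close>)

lemma valid_gadget:
  assumes ip: "interval_partition L ws"
  shows "\<forall>l\<in>set (gadget L ws i j). valid_layer L l"
proof -
  let ?TA = "TA L ws i j" and ?TN = "TN L ws i j"
  have TAc: "\<And>t. ?TA t \<Longrightarrow> 1 \<le> snd t" using TA_c by blast
  have TNc: "1 \<le> snd t \<and> 1 \<le> fst t" if h: "?TN t" for t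
  proof -
    have "1 \<le> off ws (snd t)" "1 \<le> fst t" using h by (auto simp: TN_def TA_def)
    then show ?thesis using off_le[of ws "snd t"] by simp
  qed
  have l1: "valid_layer L (cxl L ?TA hctl)"
  proof (rule valid_cxl2)
    show "\<forall>t\<in>sites L. ?TA t \<longrightarrow> hctl t \<in> sites L \<and> adjacent (hctl t) t"
      using TAc adj_h by (auto simp: hctl_def sites_iff)
    show "\<forall>t\<in>sites L. \<forall>t'\<in>sites L. ?TA t \<longrightarrow> ?TA t' \<longrightarrow> hctl t \<noteq> t'"
      using TAc mod2_pred by (fastforce simp: TA_def hctl_def)
    show "\<forall>t\<in>sites L. \<forall>t'\<in>sites L. ?TA t \<longrightarrow> ?TA t' \<longrightarrow> hctl t = hctl t' \<longrightarrow> t = t'"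
      using TAc hctl_inj by blast
  qed
  have l2: "valid_layer L (cxl L ?TN vctl)"
  proof (rule valid_cxl2)
    show "\<forall>t\<in>sites L. ?TN t \<longrightarrow> vctl t \<in> sites L \<and> adjacent (vctl t) t"
    proof (intro ballI impI)
      fix t assume t: "t \<in> sites L" "?TN t"
      then have "1 \<le> fst t" using TNc by blast
      then show "vctl t \<in> sites L \<and> adjacent (vctl t) t" using t(1)
        by (auto simp: vctl_def sites_iff adjacent_def)
    qed
    show "\<forall>t\<in>sites L. \<forall>t'\<in>sites L. ?TN t \<longrightarrow> ?TN t' \<longrightarrow> vctl t \<noteq> t'"
    proof (intro ballI impI)
      fix t t' assume h: "t \<in> sites L" "t' \<in> sites L" "?TN t" "?TN t'"
      have "(fst t - 1) mod 2 = i" "(fst t' - 1) mod 2 = i" "1 \<le> fst t" "1 \<le> fst t'" using h by (auto simp: TN_def TA_def)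
      then show "vctl t \<noteq> t'" using mod2_pred[of "fst t - 1"] by (auto simp: vctl_def)
    qed
    show "\<forall>t\<in>sites L. \<forall>t'\<in>sites L. ?TN t \<longrightarrow> ?TN t' \<longrightarrow> vctl t = vctl t' \<longrightarrow> t = t'"
    proof (intro ballI impI)
      fix t t' assume h: "t \<in> sites L" "t' \<in> sites L" "?TN t" "?TN t'" "vctl t = vctl t'"
      have "1 \<le> fst t" "1 \<le> fst t'" using TNc h(3,4) by auto
      then show "t = t'" using h(5) by (auto simp: vctl_def prod_eq_iff)
    qed
  qed
  have l3: "valid_layer L (cxl L ?TN hctl)"
  proof (rule valid_cxl2)
    show "\<forall>t\<in>sites L. ?TN t \<longrightarrow> hctl t \<in> sites L \<and> adjacent (hctl t) t"
      using TNc adj_h by (auto simp: hctl_def sites_iff)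
    show "\<forall>t\<in>sites L. \<forall>t'\<in>sites L. ?TN t \<longrightarrow> ?TN t' \<longrightarrow> hctl t \<noteq> t'"
    proof (intro ballI impI)
      fix t t' assume h: "t \<in> sites L" "t' \<in> sites L" "?TN t" "?TN t'"
      have "snd t mod 2 = j" "snd t' mod 2 = j" using h by (auto simp: TN_def TA_def)
      then show "hctl t \<noteq> t'" using mod2_pred[of "snd t"] TNc[OF h(3)] by (auto simp: hctl_def)
    qed
    show "\<forall>t\<in>sites L. \<forall>t'\<in>sites L. ?TN t \<longrightarrow> ?TN t' \<longrightarrow> hctl t = hctl t' \<longrightarrow> t = t'"
      using TNc hctl_inj by blast
  qed
  have lz: "valid_layer L (czl L ?TA nN nB)"
  proof (rule valid_czl)
    show "\<forall>t\<in>sites L. ?TA t \<longrightarrow> nN t \<in> sites L \<and> nB t \<in> sites L \<and> adjacent (nN t) (nB t)"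
    proof (intro ballI impI)
      fix t assume t: "t \<in> sites L" "?TA t"
      have "1 \<le> snd t" "Suc (fst t) < L" using TAc[OF t(2)] t(2) unfolding TA_def by auto
      then show "nN t \<in> sites L \<and> nB t \<in> sites L \<and> adjacent (nN t) (nB t)" using t(1)
        by (auto simp: nN_def nB_def sites_iff adjacent_def)
    qed
    show "\<forall>t\<in>sites L. \<forall>t'\<in>sites L. ?TA t \<longrightarrow> ?TA t' \<longrightarrow> t \<noteq> t' \<longrightarrow> {nN t, nB t} \<inter> {nN t', nB t'} = {}"
    proof (intro ballI impI)
      fix t t' assume h: "t \<in> sites L" "t' \<in> sites L" "?TA t" "?TA t'" "t \<noteq> t'"
      have p: "snd t mod 2 = j" "snd t' mod 2 = j" "1 \<le> snd t" "1 \<le> snd t'" using h TAc by (auto simp: TA_def)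
      have 1: "nN t \<noteq> nN t'" using h(5) by (auto simp: nN_def prod_eq_iff)
      have 2: "nB t \<noteq> nB t'" using h(5) p by (auto simp: nB_def prod_eq_iff)
      have 3: "nN t \<noteq> nB t'" using p mod2_pred[of "snd t'"] by (auto simp: nN_def nB_def)
      have 4: "nB t \<noteq> nN t'" using p mod2_pred[of "snd t"] by (auto simp: nN_def nB_def)
      show "{nN t, nB t} \<inter> {nN t', nB t'} = {}" using 1 2 3 4 by auto
    qed
  qed
  show ?thesis unfolding gadget_def using l1 l2 l3 lz by auto
qed

lemma valid_C:
  assumes ip: "interval_partition L ws"
  shows "\<forall>l\<in>set (Cws L ws). valid_layer L l"
proof -
  have h: "\<forall>l\<in>set (concat (map (Hk L ws) [1..<L])). valid_layer L l"
    using valid_Hx[OF ip] valid_Hz[OF ip] by (auto simp: Hk_def)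
  have v: "\<forall>l\<in>set (map (Vl L) [0..<L - 1]). valid_layer L l" using valid_Vl by auto
  have p: "\<forall>l\<in>set (Pstage L ws). valid_layer L l" using valid_gadget[OF ip] by (auto simp: Pstage_def)
  have hi: "\<forall>l\<in>set (map (\<lambda>k. cxl L (\<lambda>t. off ws (snd t) = k) hctl) (rev [1..<L])). valid_layer L l"
    using valid_Hx[OF ip] by auto
  show ?thesis using h v p hi unfolding Cws_def by auto
qed

lemma nosingle_C: "\<forall>l\<in>set (Cws L ws). \<forall>g\<in>set l. \<not> is_single g"
  unfolding Cws_def Pstage_def gadget_def Hk_def Vl_def
  using nosingle_cxl nosingle_czl by auto

lemma sum_filter_le: "distinct ks \<Longrightarrow> sum_list (map (\<lambda>k. length (filter (\<lambda>x. f x = k) xs)) ks) \<le> length xs"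
proof (induction xs)
  case Nil then show ?case by (simp add: sum_list_triv)
next
  case (Cons x xs)
  have "sum_list (map (\<lambda>k. length (filter (\<lambda>x. f x = k) (x # xs))) ks)
      = sum_list (map (\<lambda>k. (if f x = k then 1 else 0) + length (filter (\<lambda>x. f x = k) xs)) ks)"
    by (intro arg_cong[where f=sum_list] map_cong) auto
  also have "\<dots> = sum_list (map (\<lambda>k. if f x = k then 1 else 0) ks) + sum_list (map (\<lambda>k. length (filter (\<lambda>x. f x = k) xs)) ks)"
    by (simp add: sum_list_addf)
  also have "sum_list (map (\<lambda>k. if f x = k then 1 else 0) ks) \<le> (1::nat)"
    using Cons.prems by (simp add: sum_list_distinct_conv_sum_set sum.delta)
  finally show ?case using Cons by simp
qed

lemma sl_concat: "sum_list (concat xss) = sum_list (map sum_list (xss :: nat list list))"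
  by (induction xss) auto

lemma sum_list_bound: "(\<forall>x\<in>set xs. f x \<le> (B::nat)) \<Longrightarrow> sum_list (map f xs) \<le> length xs * B"
  by (induction xs) auto

lemma len_cxl: "length (cxl L T ctl) = length (filter T (sl L))" by (simp add: cxl_def)
lemma len_czl: "length (czl L T u v) = length (filter T (sl L))" by (simp add: czl_def)
lemma len_filter_sl: "length (filter T (sl L)) \<le> L * L"
  using length_filter_le[of T "sl L"] by simp

lemma gc_app: "gate_count (a @ b) = gate_count a + gate_count b" by (simp add: gate_count_def)

lemma gate_count_C: "gate_count (Cws L ws) \<le> 33 * (L * L)"
proof -
  let ?f = "\<lambda>k. length (filter (\<lambda>t. off ws (snd t) = k) (sl L))"
  have sf: "sum_list (map ?f ks) \<le> L * L" if "distinct ks" for ks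
    using sum_filter_le[OF that, of "\<lambda>t. off ws (snd t)" "sl L"] by simp
  have gh: "gate_count (concat (map (Hk L ws) [1..<L])) \<le> 2 * (L * L)"
  proof -
    have "gate_count (concat (map (Hk L ws) [1..<L])) = sum_list (map (\<lambda>k. length (filter (\<lambda>t. off ws (snd t) = k \<and> odd (fst t)) (sl L)) + ?f k) [1..<L])"
      by (simp add: gate_count_def Hk_def len_cxl len_czl sl_concat map_concat comp_def)
    also have "\<dots> \<le> sum_list (map (\<lambda>k. 2 * ?f k) [1..<L])"
    proof (rule sum_list_mono)
      fix k
      have "length (filter (\<lambda>t. off ws (snd t) = k \<and> odd (fst t)) (sl L)) \<le> ?f k"
        using length_filter_le[of "\<lambda>t. odd (fst t)" "filter (\<lambda>t. off ws (snd t) = k) (sl L)"]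
        by (simp add: filter_filter conj_commute)
      then show "length (filter (\<lambda>t. off ws (snd t) = k \<and> odd (fst t)) (sl L)) + ?f k \<le> 2 * ?f k" by simp
    qed
    also have "\<dots> = 2 * sum_list (map ?f [1..<L])" by (simp add: sum_list_const_mult)
    also have "\<dots> \<le> 2 * (L * L)" using sf[of "[1..<L]"] by simp
    finally show ?thesis .
  qed
  have gv: "gate_count (map (Vl L) ks) \<le> L * L" if "distinct ks" for ks
  proof -
    have "gate_count (map (Vl L) ks) = sum_list (map (\<lambda>k. length (filter (\<lambda>t. fst t = k) (sl L))) ks)"
      by (simp add: gate_count_def Vl_def len_cxl comp_def)
    also have "\<dots> \<le> L * L" using sum_filter_le[OF that, of fst "sl L"] by simp
    finally show ?thesis .
  qed
  have gp: "gate_count (Pstage L ws) \<le> 28 * (L * L)"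
  proof -
    have "gate_count (Pstage L ws) \<le> length (Pstage L ws) * (L * L)"
      unfolding gate_count_def
      by (rule sum_list_bound) (auto simp: Pstage_def gadget_def len_cxl len_czl len_filter_sl)
    moreover have "length (Pstage L ws) = 28" by (simp add: Pstage_def gadget_def)
    ultimately show ?thesis by simp
  qed
  have ghi: "gate_count (map (\<lambda>k. cxl L (\<lambda>t. off ws (snd t) = k) hctl) (rev [1..<L])) \<le> L * L"
  proof -
    have "gate_count (map (\<lambda>k. cxl L (\<lambda>t. off ws (snd t) = k) hctl) (rev [1..<L])) = sum_list (map ?f (rev [1..<L]))"
      by (simp add: gate_count_def len_cxl comp_def)
    also have "\<dots> \<le> L * L" by (rule sf) simp
    finally show ?thesis .
  qed
  have "gate_count (Cws L ws) = gate_count (concat (map (Hk L ws) [1..<L])) + gate_count (map (Vl L) (rev [0..<L - 1]))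
     + gate_count (Pstage L ws) + gate_count (map (Vl L) [0..<L - 1]) + gate_count (map (\<lambda>k. cxl L (\<lambda>t. off ws (snd t) = k) hctl) (rev [1..<L]))"
    by (simp add: Cws_def gc_app)
  also have "\<dots> \<le> 2 * (L * L) + L * L + 28 * (L * L) + L * L + L * L"
    using gh gv[of "rev [0..<L - 1]"] gv[of "[0..<L - 1]"] gp ghi by (intro add_mono) auto
  finally show ?thesis by simp
qed

lemma depth_C: "depth (Cws L ws) = 5 * (L - 1) + 28"
proof -
  have "length (concat (map (Hk L ws) [1..<L])) = 2 * (L - 1)"
    by (simp add: length_concat Hk_def comp_def sum_list_triv)
  then show ?thesis by (simp add: depth_def Cws_def Pstage_def gadget_def)
qed

lemma lin_single: "y \<subseteq> sites L \<Longrightarrow> lin L (\<lambda>t. {t}) y = y"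
proof -
  assume y: "y \<subseteq> sites L"
  have "lin L (\<lambda>t. {t}) y = {q \<in> sites L. q \<in> y}" unfolding lin_def odd_single by simp
  then show ?thesis using y by auto
qed

theorem mainTheorem5:
  shows "\<exists>c1 c2 :: nat. \<forall>L ws ws'.
           interval_partition L ws \<longrightarrow> interval_partition L ws' \<longrightarrow>
           (\<exists>cs. valid_circuit L cs \<and>
                 gate_count cs \<le> c1 * L ^ 2 \<and>
                 depth cs \<le> c2 * L \<and>
                 maps_encoding L (circuit_op L cs) (boustro L ws) (boustro L ws'))"
proof (rule exI[of _ 66], rule exI[of _ 56], intro allI impI)
  fix L ws ws' assume ip: "interval_partition L ws" and ip': "interval_partition L ws'"
  show "\<exists>cs. valid_circuit L cs \<and> gate_count cs \<le> 66 * L ^ 2 \<and> depth cs \<le> 56 * L \<and>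
           maps_encoding L (circuit_op L cs) (boustro L ws) (boustro L ws')"
  proof (cases "L = 0")
    case True
    then show ?thesis
      by (intro exI[of _ "[]"]) (simp add: valid_circuit_def gate_count_def depth_def maps_encoding_def sites_def)
  next
    case False
    then have L: "1 \<le> L" by simp
    define cs where "cs = Cws L ws @ Cws L ws'"
    have vc: "valid_circuit L cs" unfolding valid_circuit_def cs_def using valid_C[OF ip] valid_C[OF ip'] by auto
    have gc: "gate_count cs \<le> 66 * L ^ 2"
      using gate_count_C[of L ws] gate_count_C[of L ws'] unfolding cs_def gc_app power2_eq_square by simp
    have dp: "depth cs \<le> 56 * L" using L unfolding cs_def depth_def
      using depth_C[of L ws] depth_C[of L ws'] unfolding depth_def by simp
    let ?n = "\<lambda>y. (nR L ws y + nP L ws y) + (nR L ws' y + nP L ws' y)"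
    have sm: "sim L cs (\<lambda>t. {t}) (\<lambda>t. {t}) ?n"
      unfolding cs_def by (rule sim_append[OF sim_C[OF ip L] sim_C[OF ip' L]])
    have gates: "\<forall>l\<in>set cs. \<forall>g\<in>set l. valid_gate L g \<and> \<not> is_single g"
      using vc nosingle_C[of L ws] nosingle_C[of L ws'] unfolding valid_circuit_def valid_layer_def cs_def by auto
    have r0: "rep L (circuit_op L cs) (circ_s cs) (\<lambda>y. (-1) ^ circ_n cs y)" by (rule rep_circ[OF gates])
    have eqs: "circ_s cs y = y \<and> circ_n cs y = ?n y" if "y \<in> Pow (sites L)" for y
      using sm that lin_single[of y L] unfolding sim_def by auto
    have W: "rep L (circuit_op L cs) id (\<lambda>y. (-1::complex) ^ ?n y)"
      by (rule rep_cong[OF r0]) (use eqs in auto)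
    have nE: "\<forall>y. y \<subseteq> sites L \<longrightarrow> even (?n y + NE (Ews ws) y + NE (Ews ws') y)"
    proof (intro allI impI)
      fix y assume y: "y \<subseteq> sites L"
      show "even (?n y + NE (Ews ws) y + NE (Ews ws') y)"
        using parity_C[OF ip y] parity_C[OF ip' y] by presburger
    qed
    have me: "maps_encoding L (circuit_op L cs) (boustro L ws) (boustro L ws')"
      by (rule maps_enc_diag[OF W]) (use parity_main[OF ip ip' _ _ nE] in blast)
    show ?thesis using vc gc dp me by blast
  qed
qed


end
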